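(* In the setting described in the context, let $t_1,\dots,t_k$ be an enumeration of the distinct elements of $T\setminus D$. For $j=0,\dots,k$ let $A_j=D\cup\{t_1,\dots,t_j\}$. Set $c_0=\tfrac12|\Pi_D|$. For $j\ge1$, write $t_j=[e_1,e_2]$ and let $L_1,L_2\in\Pi_{A_{j-1}}$ be the circuits containing $e_1$ and $e_2$. Set $c_j=c_{j-1}-1$ if $L_2\neq (L_1)^*_{A_{j-1}}$ and $L_1,L_2$ are not both shorted with respect to $A_{j-1}$; otherwise set $c_j=c_{j-1}$. Then: (a) for every $j$, $c_j$ equals the number of circuit pairs of $\Pi_{A_j}$ that are not shorted; (b) $\bar x$ is an extreme point of $P^n$ if and only if $c_j=0$ for some $j\in\{0,\dots,k\}$, equivalently if and only if every circuit of $\Pi_{D\cup T}$ is shorted.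
   Context: Let $n\ge4$, $V=\{0,\dots,n-1\}$, and let $E=\{(u,v)\in V\times V:u\ne v\}$ be the set of arcs, written $uv$. Let $\chi_e\in\mathbb R^E$ be unit vectors and $\chi_F=\sum_{e\in F}\chi_e$. Let $\delta^\pm(w)$ be the arcs leaving/entering $w$, let $\delta^+(S)=\{uv:u\in S,v\notin S\}$, let $\mathcal S=\{S\subset V:2\le|S|\le n-2\}$, and let $x(F)=\sum_{e\in F}x_e$. The polytope is $P^n=\{x\in\mathbb R^E: x(\delta^+(w))=x(\delta^-(w))=1\ \forall w,\ x(\delta^+(S))\ge1\ \forall S\in\mathcal S,\ x\ge0\}$. Fix $\bar x\in P^n\cap\{0,\tfrac12\}^E$ and let $E_{\bar x}=\{e:\bar x_e=\tfrac12\}$. For $a\in\{0,1\}^E$ let $\mathrm{pr}(a)=\sum_{e\in E_{\bar x}}a_e\chi_e$. Let $\mathcal S_{\bar x}=\{S\in\mathcal S:\bar x(\delta^+(S))=1\}$. Define the sets $$D=\{\mathrm{pr}(\chi_{\delta^+(u)}),\mathrm{pr}(\chi_{\delta^-(u)}):u\in V\}, \qquad T=\{\mathrm{pr}(\chi_{\delta^+(S)}):S\in\mathcal S_{\bar x}\}.$$ Every vector of $D\cup T$ equals $\chi_{e_1}+\chi_{e_2}$ for two distinct arcs $e_1,e_2\in E_{\bar x}$; it is written $[e_1,e_2]=[e_2,e_1]$. Let $A$ be a set with $D\subseteq A\subseteq D\cup T$. On $E_{\bar x}$ define the relation $e\sim_A e'$ iff there is $\bar e\in E_{\bar x}$ with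 $[e,\bar e]\in A$ and $[\bar e,e']\in A$. Let $\equiv_A$ be its transitive closure; this is an equivalence relation. The equivalence classes are called circuits, and they form the circuit partition $\Pi_A$ of $E_{\bar x}$. For $L\in\Pi_A$, the set $\{\bar e\in E_{\bar x}:\exists e\in L,\ [e,\bar e]\in A\}$ is nonempty and contained in a unique circuit, denoted $L^*_A$ and called the dual of $L$. The pair $\{L,L^*_A\}$ is a circuit pair. $L$ is called shorted if $L^*_A=L$. For $A=D$ no circuit is shorted and circuits come in disjoint dual pairs, so $|\Pi_D|$ is even. *)

theory Defs
  imports Main "HOL-Analysis.Analysis"
begin

type_synonym arc = "nat \<times> nat"

definition verts :: "nat \<Rightarrow> nat set" where
  "verts n = {0..<n}"

definition arcs :: "nat \<Rightarrow> arc set" where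
  "arcs n = {(u,v). u \<in> verts n \<and> v \<in> verts n \<and> u \<noteq> v}"

definition out_arcs :: "nat \<Rightarrow> nat \<Rightarrow> arc set" where
  "out_arcs n w = {e \<in> arcs n. fst e = w}"

definition in_arcs :: "nat \<Rightarrow> nat \<Rightarrow> arc set" where
  "in_arcs n w = {e \<in> arcs n. snd e = w}"

definition out_cut :: "nat \<Rightarrow> nat set \<Rightarrow> arc set" where
  "out_cut n S = {e \<in> arcs n. fst e \<in> S \<and> snd e \<notin> S}"

definition subtour_sets :: "nat \<Rightarrow> nat set set" where
  "subtour_sets n = {S. S \<subseteq> verts n \<and> 2 \<le> card S \<and> card S \<le> n - 2}"

text \<open>Points of R^E are functions on arcs that vanish off E.\<close>
definition polytope :: "nat \<Rightarrow> (arc \<Rightarrow> real) set" where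
  "polytope n = {x. (\<forall>e. e \<notin> arcs n \<longrightarrow> x e = 0)
      \<and> (\<forall>w \<in> verts n. sum x (out_arcs n w) = 1 \<and> sum x (in_arcs n w) = 1)
      \<and> (\<forall>S \<in> subtour_sets n. sum x (out_cut n S) \<ge> 1)
      \<and> (\<forall>e \<in> arcs n. x e \<ge> 0)}"

definition is_extreme_point :: "(arc \<Rightarrow> real) \<Rightarrow> (arc \<Rightarrow> real) set \<Rightarrow> bool" where
  "is_extreme_point x P \<longleftrightarrow> x \<in> P \<and>
     \<not> (\<exists>y \<in> P. \<exists>z \<in> P. y \<noteq> z \<and> (\<exists>l::real. 0 < l \<and> l < 1 \<and>
            x = (\<lambda>e. l * y e + (1 - l) * z e)))"

definition half_arcs :: "nat \<Rightarrow> (arc \<Rightarrow> real) \<Rightarrow> arc set" where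
  "half_arcs n x = {e \<in> arcs n. x e = 1/2}"

text \<open>A 0/1 vector chi_F is represented by the arc set F; pr(chi_F) = chi_(F \<inter> E_x).
  So the vectors [e1,e2] are represented by the two-element sets {e1,e2}.\<close>
definition pr :: "nat \<Rightarrow> (arc \<Rightarrow> real) \<Rightarrow> arc set \<Rightarrow> arc set" where
  "pr n x F = F \<inter> half_arcs n x"

definition tight_sets :: "nat \<Rightarrow> (arc \<Rightarrow> real) \<Rightarrow> nat set set" where
  "tight_sets n x = {S \<in> subtour_sets n. sum x (out_cut n S) = 1}"

definition Dset :: "nat \<Rightarrow> (arc \<Rightarrow> real) \<Rightarrow> arc set set" where
  "Dset n x = {pr n x (out_arcs n u) | u. u \<in> verts n} \<union> {pr n x (in_arcs n u) | u. u \<in> verts n}"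

definition Tset :: "nat \<Rightarrow> (arc \<Rightarrow> real) \<Rightarrow> arc set set" where
  "Tset n x = {pr n x (out_cut n S) | S. S \<in> tight_sets n x}"

definition sim_rel :: "nat \<Rightarrow> (arc \<Rightarrow> real) \<Rightarrow> arc set set \<Rightarrow> arc rel" where
  "sim_rel n x A = {(e, e'). e \<in> half_arcs n x \<and> e' \<in> half_arcs n x \<and>
       (\<exists>eb \<in> half_arcs n x. {e, eb} \<in> A \<and> {eb, e'} \<in> A)}"

definition circ_equiv :: "nat \<Rightarrow> (arc \<Rightarrow> real) \<Rightarrow> arc set set \<Rightarrow> arc rel" where
  "circ_equiv n x A = (sim_rel n x A)\<^sup>+"

definition circuits :: "nat \<Rightarrow> (arc \<Rightarrow> real) \<Rightarrow> arc set set \<Rightarrow> arc set set" where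
  "circuits n x A = half_arcs n x // circ_equiv n x A"

definition circuit_of :: "nat \<Rightarrow> (arc \<Rightarrow> real) \<Rightarrow> arc set set \<Rightarrow> arc \<Rightarrow> arc set" where
  "circuit_of n x A e = circ_equiv n x A `` {e}"

definition dual_circuit :: "nat \<Rightarrow> (arc \<Rightarrow> real) \<Rightarrow> arc set set \<Rightarrow> arc set \<Rightarrow> arc set" where
  "dual_circuit n x A L = (THE M. M \<in> circuits n x A \<and>
      {eb \<in> half_arcs n x. \<exists>e \<in> L. {e, eb} \<in> A} \<subseteq> M)"

definition shorted :: "nat \<Rightarrow> (arc \<Rightarrow> real) \<Rightarrow> arc set set \<Rightarrow> arc set \<Rightarrow> bool" where
  "shorted n x A L \<longleftrightarrow> dual_circuit n x A L = L"

definition nonshorted_pairs :: "nat \<Rightarrow> (arc \<Rightarrow> real) \<Rightarrow> arc set set \<Rightarrow> arc set set set" where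
  "nonshorted_pairs n x A = {{L, dual_circuit n x A L} | L. L \<in> circuits n x A \<and> \<not> shorted n x A L}"

definition A_step :: "nat \<Rightarrow> (arc \<Rightarrow> real) \<Rightarrow> arc set list \<Rightarrow> nat \<Rightarrow> arc set set" where
  "A_step n x ts j = Dset n x \<union> set (take j ts)"

definition decreases :: "nat \<Rightarrow> (arc \<Rightarrow> real) \<Rightarrow> arc set set \<Rightarrow> arc set \<Rightarrow> bool" where
  "decreases n x A t \<longleftrightarrow> (\<exists>e1 e2. t = {e1, e2} \<and> e1 \<noteq> e2 \<and>
      circuit_of n x A e2 \<noteq> dual_circuit n x A (circuit_of n x A e1) \<and>
      \<not> (shorted n x A (circuit_of n x A e1) \<and> shorted n x A (circuit_of n x A e2)))"

primrec counter :: "nat \<Rightarrow> (arc \<Rightarrow> real) \<Rightarrow> arc set list \<Rightarrow> nat \<Rightarrow> int" where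
  "counter n x ts 0 = int (card (circuits n x (Dset n x))) div 2"
| "counter n x ts (Suc j) = (if decreases n x (A_step n x ts j) (ts ! j)
       then counter n x ts j - 1 else counter n x ts j)"

end

theory Submission
  imports Defs
begin

definition wfA :: "arc set \<Rightarrow> arc set set \<Rightarrow> bool" where
  "wfA V A \<longleftrightarrow> finite V \<and> (\<forall>F\<in>A. \<exists>a b. a \<noteq> b \<and> a \<in> V \<and> b \<in> V \<and> F = {a,b}) \<and> (\<forall>a\<in>V. \<exists>b. {a,b} \<in> A)"

context fixes n :: nat and x :: "arc \<Rightarrow> real" begin

abbreviation "H \<equiv> half_arcs n x"
abbreviation "EE A \<equiv> circ_equiv n x A"

lemma wf_edge: "wfA V A \<Longrightarrow> {a,b} \<in> A \<Longrightarrow> a \<in> V \<and> b \<in> V \<and> a \<noteq> b"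
proof -
  assume w: "wfA V A" and e: "{a,b} \<in> A"
  then obtain a' b' where "a' \<noteq> b'" "a' \<in> V" "b' \<in> V" "{a,b} = {a',b'}" unfolding wfA_def by blast
  then show ?thesis by (auto simp: doubleton_eq_iff)
qed

lemma sim_iff: "wfA H A \<Longrightarrow> (e,e') \<in> sim_rel n x A \<longleftrightarrow> (\<exists>b. {e,b} \<in> A \<and> {b,e'} \<in> A)"
  unfolding sim_rel_def using wf_edge by blast

lemma E_sub: "EE A \<subseteq> H \<times> H"
  unfolding circ_equiv_def by (rule trancl_subset_Sigma) (auto simp: sim_rel_def)

lemma E_refl: "wfA H A \<Longrightarrow> a \<in> H \<Longrightarrow> (a,a) \<in> EE A"
proof -
  assume w: "wfA H A" and a: "a \<in> H"
  then obtain b where "{a,b} \<in> A" unfolding wfA_def by blast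
  moreover from this have "{b,a} \<in> A" by (simp add: insert_commute)
  ultimately have "(a,a) \<in> sim_rel n x A" unfolding sim_iff[OF w] by blast
  then show ?thesis unfolding circ_equiv_def by blast
qed

lemma sim_sym: "wfA H A \<Longrightarrow> (a,b) \<in> sim_rel n x A \<Longrightarrow> (b,a) \<in> sim_rel n x A"
proof -
  assume w: "wfA H A" and "(a,b) \<in> sim_rel n x A"
  then obtain c where "{a,c} \<in> A" "{c,b} \<in> A" unfolding sim_iff[OF w] by blast
  then have "{b,c} \<in> A" "{c,a} \<in> A" by (simp_all add: insert_commute)
  then show ?thesis unfolding sim_iff[OF w] by blast
qed

lemma E_sym: "wfA H A \<Longrightarrow> (a,b) \<in> EE A \<Longrightarrow> (b,a) \<in> EE A"
proof -
  assume w: "wfA H A" and ab: "(a,b) \<in> EE A"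
  have "sym (sim_rel n x A)" unfolding sym_def using sim_sym[OF w] by blast
  then have "sym (EE A)" unfolding circ_equiv_def by (rule sym_trancl)
  then show ?thesis using ab unfolding sym_def by blast
qed

lemma E_trans: "(a,b) \<in> EE A \<Longrightarrow> (b,c) \<in> EE A \<Longrightarrow> (a,c) \<in> EE A"
  unfolding circ_equiv_def by (rule trancl_trans)

lemma E_equiv: "wfA H A \<Longrightarrow> equiv H (EE A)"
proof -
  assume w: "wfA H A"
  show ?thesis unfolding equiv_def refl_on_def sym_def trans_def
  proof (intro conjI allI impI ballI)
    show "EE A \<subseteq> H \<times> H" by (rule E_sub)
  next
    fix a assume "a \<in> H" then show "(a,a) \<in> EE A" by (rule E_refl[OF w])
  next
    fix a b assume "(a,b) \<in> EE A" then show "(b,a) \<in> EE A" by (rule E_sym[OF w])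
  next
    fix a b c assume "(a,b) \<in> EE A" "(b,c) \<in> EE A" then show "(a,c) \<in> EE A" by (rule E_trans)
  qed
qed

lemma sim_E: "wfA H A \<Longrightarrow> {a,b} \<in> A \<Longrightarrow> {b,c} \<in> A \<Longrightarrow> (a,c) \<in> EE A"
  unfolding circ_equiv_def using sim_iff by blast

lemma nb_class: 
  assumes w: "wfA H A" and ac: "(a,c) \<in> EE A"
  shows "{a,b} \<in> A \<Longrightarrow> {c,d} \<in> A \<Longrightarrow> (b,d) \<in> EE A"
proof -
  have "(a,c) \<in> (sim_rel n x A)\<^sup>+" using ac unfolding circ_equiv_def .
  then show "{a,b} \<in> A \<Longrightarrow> {c,d} \<in> A \<Longrightarrow> (b,d) \<in> EE A"
  proof (induct arbitrary: d rule: trancl_induct)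
    case (base y)
    then obtain m where m: "{a,m} \<in> A" "{m,y} \<in> A" using sim_iff[OF w] by blast
    have "(b,m) \<in> EE A" using sim_E[OF w, of b a m] base m by (metis insert_commute)
    moreover have "(m,d) \<in> EE A" using sim_E[OF w, of m y d] base m by blast
    ultimately show ?case by (rule E_trans)
  next
    case (step y z)
    then obtain m where m: "{y,m} \<in> A" "{m,z} \<in> A" using sim_iff[OF w] by blast
    have "(b,m) \<in> EE A" using step m by blast
    moreover have "(m,d) \<in> EE A" using sim_E[OF w, of m z d] step m by blast
    ultimately show ?case by (rule E_trans)
  qed
qed


lemma circ_iff: "L \<in> circuits n x A \<longleftrightarrow> (\<exists>a\<in>H. L = EE A `` {a})"
  unfolding circuits_def quotient_def by simp

lemma nbr_ex: "wfA H A \<Longrightarrow> a \<in> H \<Longrightarrow> \<exists>b. {a,b} \<in> A"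
  unfolding wfA_def by blast

lemma cls_eq: "wfA H A \<Longrightarrow> a \<in> H \<Longrightarrow> b \<in> H \<Longrightarrow> EE A``{a} = EE A``{b} \<longleftrightarrow> (a,b) \<in> EE A"
  by (rule eq_equiv_class_iff[OF E_equiv])

lemma dual_eq:
  assumes w: "wfA H A" and a: "a \<in> H" and ab: "{a,b} \<in> A"
  shows "dual_circuit n x A (EE A``{a}) = EE A``{b}"
  unfolding dual_circuit_def
proof (rule the_equality)
  have b: "b \<in> H" using wf_edge[OF w ab] by blast
  show "EE A `` {b} \<in> circuits n x A \<and> {eb \<in> H. \<exists>e\<in>EE A `` {a}. {e, eb} \<in> A} \<subseteq> EE A `` {b}"
  proof
    show "EE A `` {b} \<in> circuits n x A" unfolding circ_iff using b by blast
    show "{eb \<in> H. \<exists>e\<in>EE A `` {a}. {e, eb} \<in> A} \<subseteq> EE A `` {b}"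
    proof
      fix eb assume "eb \<in> {eb \<in> H. \<exists>e\<in>EE A `` {a}. {e, eb} \<in> A}"
      then obtain e where "(a,e) \<in> EE A" "{e,eb} \<in> A" by blast
      then have "(b,eb) \<in> EE A" using nb_class[OF w _ ab] by simp
      then show "eb \<in> EE A `` {b}" by blast
    qed
  qed
next
  fix M assume M: "M \<in> circuits n x A \<and> {eb \<in> H. \<exists>e\<in>EE A `` {a}. {e, eb} \<in> A} \<subseteq> M"
  then obtain c where c: "c \<in> H" "M = EE A``{c}" unfolding circ_iff by blast
  have "a \<in> EE A``{a}" using E_refl[OF w a] by blast
  moreover have "b \<in> H" using wf_edge[OF w ab] by blast
  ultimately have "b \<in> {eb \<in> H. \<exists>e\<in>EE A `` {a}. {e, eb} \<in> A}" using ab by blast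
  then have "b \<in> M" using M by blast
  then have "(c,b) \<in> EE A" using c by blast
  then show "M = EE A``{b}" using c(2) equiv_class_eq[OF E_equiv[OF w]] by simp
qed

lemma shorted_iff:
  assumes w: "wfA H A" and a: "a \<in> H" and ab: "{a,b} \<in> A"
  shows "shorted n x A (EE A``{a}) \<longleftrightarrow> (a,b) \<in> EE A"
proof -
  have b: "b \<in> H" using wf_edge[OF w ab] by blast
  have "shorted n x A (EE A``{a}) \<longleftrightarrow> EE A``{b} = EE A``{a}"
    unfolding shorted_def dual_eq[OF w a ab] ..
  also have "\<dots> \<longleftrightarrow> (b,a) \<in> EE A" using cls_eq[OF w b a] .
  also have "\<dots> \<longleftrightarrow> (a,b) \<in> EE A" using E_sym[OF w] by blast
  finally show ?thesis .
qed

lemma dual_props: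
  assumes w: "wfA H A" and L: "L \<in> circuits n x A"
  shows "dual_circuit n x A L \<in> circuits n x A \<and> dual_circuit n x A (dual_circuit n x A L) = L"
proof -
  obtain a where a: "a \<in> H" "L = EE A``{a}" using L circ_iff by blast
  obtain b where ab: "{a,b} \<in> A" using nbr_ex[OF w a(1)] by blast
  have b: "b \<in> H" using wf_edge[OF w ab] by blast
  have ba: "{b,a} \<in> A" using ab by (simp add: insert_commute)
  have "EE A``{b} \<in> circuits n x A" unfolding circ_iff using b by blast
  then show ?thesis using dual_eq[OF w a(1) ab] dual_eq[OF w b ba] a by simp
qed

lemma finite_circuits: "wfA H A \<Longrightarrow> finite (circuits n x A)"
  unfolding circuits_def wfA_def using finite_quotient[OF _ E_sub] by blast

lemma card_pairs:
  assumes w: "wfA H A"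
  shows "2 * card (nonshorted_pairs n x A) = card {L \<in> circuits n x A. \<not> shorted n x A L}"
proof -
  let ?d = "dual_circuit n x A"
  let ?NS = "{L \<in> circuits n x A. \<not> shorted n x A L}"
  have eq: "nonshorted_pairs n x A = (\<lambda>L. {L, ?d L}) ` ?NS"
    unfolding nonshorted_pairs_def by blast
  have fin: "finite ?NS" using finite_circuits[OF w] by simp
  have U: "\<Union>(nonshorted_pairs n x A) = ?NS"
  proof
    show "\<Union>(nonshorted_pairs n x A) \<subseteq> ?NS"
    proof
      fix M assume "M \<in> \<Union>(nonshorted_pairs n x A)"
      then obtain L where L: "L \<in> ?NS" "M = L \<or> M = ?d L" unfolding eq by blast
      then show "M \<in> ?NS" using dual_props[OF w] unfolding shorted_def by auto
    qed
    show "?NS \<subseteq> \<Union>(nonshorted_pairs n x A)" unfolding eq by blast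
  qed
  have f1: "finite (nonshorted_pairs n x A)" unfolding eq using fin by simp
  have f2: "finite (\<Union>(nonshorted_pairs n x A))" using U fin by simp
  have f3: "card c = 2" if "c \<in> nonshorted_pairs n x A" for c
    proof -
      from that obtain L where "L \<in> ?NS" "c = {L, ?d L}" unfolding eq by blast
      then have "L \<noteq> ?d L" "c = {L, ?d L}" unfolding shorted_def by auto
      then show "card c = 2" by simp
    qed
  have f4: "c1 \<inter> c2 = {}" if c1: "c1 \<in> nonshorted_pairs n x A" and c2: "c2 \<in> nonshorted_pairs n x A" and ne: "c1 \<noteq> c2" for c1 c2
    proof -
      obtain L where L: "L \<in> circuits n x A" "c1 = {L, ?d L}" using c1 unfolding eq by blast
      obtain M where M: "M \<in> circuits n x A" "c2 = {M, ?d M}" using c2 unfolding eq by blast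
      have dL: "?d (?d L) = L" and dM: "?d (?d M) = M" using dual_props[OF w] L M by blast+
      show "c1 \<inter> c2 = {}"
      proof (rule ccontr)
        assume "c1 \<inter> c2 \<noteq> {}"
        then have "L = M \<or> L = ?d M \<or> ?d L = M \<or> ?d L = ?d M" using L M by blast
        then have "c1 = c2"
        proof (elim disjE)
          assume "L = M" then show ?thesis using L M by simp
        next
          assume h: "L = ?d M" then have "?d L = M" using dM by simp
          then show ?thesis using L M h by (simp add: insert_commute)
        next
          assume h: "?d L = M" then have "L = ?d M" using dL by metis
          then show ?thesis using L M h by (simp add: insert_commute)
        next
          assume h: "?d L = ?d M" then have "L = M" using dL dM by metis
          then show ?thesis using L M by simp
        qed
        then show False using ne by blast
      qed
    qed
  have "2 * card (nonshorted_pairs n x A) = card (\<Union>(nonshorted_pairs n x A))"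
    by (rule card_partition[OF f1 f2 f3 f4]) auto
  then show ?thesis using U by simp
qed

end


context fixes n :: nat and x :: "arc \<Rightarrow> real" begin
abbreviation "HS \<equiv> half_arcs n x"
abbreviation "ES A \<equiv> circ_equiv n x A"

lemma wf_insert: "wfA HS A \<Longrightarrow> e1 \<in> HS \<Longrightarrow> e2 \<in> HS \<Longrightarrow> e1 \<noteq> e2 \<Longrightarrow> wfA HS (insert {e1,e2} A)"
  unfolding wfA_def by blast

lemma sim_mono: "A \<subseteq> B \<Longrightarrow> sim_rel n x A \<subseteq> sim_rel n x B"
  unfolding sim_rel_def by blast

lemma E_mono: "A \<subseteq> B \<Longrightarrow> ES A \<subseteq> ES B"
  unfolding circ_equiv_def by (rule trancl_mono_subset[OF sim_mono]) 

lemma cls_closed: "wfA HS A \<Longrightarrow> (p,q) \<in> ES A \<Longrightarrow> q \<in> ES A``{a} \<longleftrightarrow> p \<in> ES A``{a}"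
  using E_sym E_trans by blast

lemma E_new:
  assumes w: "wfA HS A" and e: "e1 \<in> HS" "e2 \<in> HS" "e1 \<noteq> e2"
    and m: "{e1,m1} \<in> A" "{e2,m2} \<in> A"
  defines "U1 \<equiv> ES A``{m1} \<union> ES A``{e2}" and "U2 \<equiv> ES A``{e1} \<union> ES A``{m2}"
  shows "(p,q) \<in> ES (insert {e1,e2} A) \<longleftrightarrow> (p,q) \<in> ES A \<or> (p \<in> U1 \<and> q \<in> U1) \<or> (p \<in> U2 \<and> q \<in> U2)
     \<or> (U1 \<inter> U2 \<noteq> {} \<and> p \<in> U1 \<union> U2 \<and> q \<in> U1 \<union> U2)"
proof -
  let ?A' = "insert {e1,e2} A"
  have w': "wfA HS ?A'" using wf_insert[OF w e] .
  define P where "P = {(p,q). (p,q) \<in> ES A \<or> (p \<in> U1 \<and> q \<in> U1) \<or> (p \<in> U2 \<and> q \<in> U2)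
     \<or> (U1 \<inter> U2 \<noteq> {} \<and> p \<in> U1 \<union> U2 \<and> q \<in> U1 \<union> U2)}"
  have c1: "q \<in> U1 \<longleftrightarrow> p \<in> U1" if "(p,q) \<in> ES A" for p q
    unfolding U1_def using cls_closed[OF w that] by blast
  have c2: "q \<in> U2 \<longleftrightarrow> p \<in> U2" if "(p,q) \<in> ES A" for p q
    unfolding U2_def using cls_closed[OF w that] by blast
  have e1U2: "e1 \<in> U2" unfolding U2_def using E_refl[OF w e(1)] by blast
  have e2U1: "e2 \<in> U1" unfolding U1_def using E_refl[OF w e(2)] by blast
  have transP: "trans P"
  proof (rule transI)
    fix p q r assume pq: "(p,q) \<in> P" and qr: "(q,r) \<in> P"
    show "(p,r) \<in> P"
    proof (cases "(p,q) \<in> ES A")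
      case True
      note T1 = this
      show ?thesis
      proof (cases "(q,r) \<in> ES A")
        case True then show ?thesis using T1 E_trans unfolding P_def by blast
      next
        case False
        then show ?thesis using qr c1[OF T1] c2[OF T1] unfolding P_def by auto
      qed
    next
      case False
      note F1 = this
      show ?thesis
      proof (cases "(q,r) \<in> ES A")
        case True then show ?thesis using pq F1 c1[OF True] c2[OF True] unfolding P_def by auto
      next
        case False
        then show ?thesis using pq qr F1 unfolding P_def by auto
      qed
    qed
  qed
  have simP: "sim_rel n x ?A' \<subseteq> P"
  proof
    fix pq assume "pq \<in> sim_rel n x ?A'"
    then obtain p q where pq: "pq = (p,q)" and "(p,q) \<in> sim_rel n x ?A'" by (cases pq) auto
    then obtain b where b: "{p,b} \<in> ?A'" "{b,q} \<in> ?A'" unfolding sim_iff[OF w'] by blast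
    have pH: "p \<in> HS" and qH: "q \<in> HS" using wf_edge[OF w' b(1)] wf_edge[OF w' b(2)] by auto
    show "pq \<in> P"
    proof (cases "{p,b} \<in> A")
      case pA: True
      show ?thesis
      proof (cases "{b,q} \<in> A")
        case True
        then have "(p,q) \<in> ES A" using sim_E[OF w pA] by blast
        then show ?thesis unfolding pq P_def by blast
      next
        case False
        then have bq: "{b,q} = {e1,e2}" using b by blast
        show ?thesis
        proof (cases "b = e1")
          case True
          then have "q = e2" using bq e(3) by (auto simp: doubleton_eq_iff)
          have "{e1,p} \<in> A" using pA True by (simp add: insert_commute)
          then have "(m1,p) \<in> ES A" using nb_class[OF w E_refl[OF w e(1)] m(1)] by blast
          then have "p \<in> U1" unfolding U1_def by blast
          then show ?thesis using e2U1 \<open>q = e2\<close> unfolding pq P_def by blast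
        next
          case False
          then have "b = e2" "q = e1" using bq e(3) by (auto simp: doubleton_eq_iff)
          have "{e2,p} \<in> A" using pA \<open>b = e2\<close> by (simp add: insert_commute)
          then have "(m2,p) \<in> ES A" using nb_class[OF w E_refl[OF w e(2)] m(2)] by blast
          then have "p \<in> U2" unfolding U2_def by blast
          then show ?thesis using e1U2 \<open>q = e1\<close> unfolding pq P_def by blast
        qed
      qed
    next
      case False
      then have pb: "{p,b} = {e1,e2}" using b by blast
      show ?thesis
      proof (cases "{b,q} \<in> A")
        case bA: True
        show ?thesis
        proof (cases "b = e1")
          case True
          then have "p = e2" using pb e(3) by (auto simp: doubleton_eq_iff)
          have "{e1,q} \<in> A" using bA True by simp
          then have "(m1,q) \<in> ES A" using nb_class[OF w E_refl[OF w e(1)] m(1)] by blast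
          then have "q \<in> U1" unfolding U1_def by blast
          then show ?thesis using e2U1 \<open>p = e2\<close> unfolding pq P_def by blast
        next
          case False
          then have "b = e2" "p = e1" using pb e(3) by (auto simp: doubleton_eq_iff)
          have "{e2,q} \<in> A" using bA \<open>b = e2\<close> by simp
          then have "(m2,q) \<in> ES A" using nb_class[OF w E_refl[OF w e(2)] m(2)] by blast
          then have "q \<in> U2" unfolding U2_def by blast
          then show ?thesis using e1U2 \<open>p = e1\<close> unfolding pq P_def by blast
        qed
      next
        case False
        then have bq: "{b,q} = {e1,e2}" using b by blast
        have "p = q" using pb bq e(3) by (auto simp: doubleton_eq_iff)
        then have "(p,q) \<in> ES A" using E_refl[OF w pH] by simp
        then show ?thesis unfolding pq P_def by blast
      qed
    qed
  qed
  have sub1: "ES ?A' \<subseteq> P"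
    unfolding circ_equiv_def using simP transP by (metis trancl_id trancl_mono_subset)
  have m1H: "m1 \<in> HS" and m2H: "m2 \<in> HS" using wf_edge[OF w m(1)] wf_edge[OF w m(2)] by auto
  have EA': "ES A \<subseteq> ES ?A'" by (rule E_mono) blast
  have g1: "(m1,e2) \<in> ES ?A'"
  proof -
    have "{m1,e1} \<in> ?A'" using m(1) by (simp add: insert_commute)
    then show ?thesis using sim_E[OF w', of m1 e1 e2] by simp
  qed
  have g2: "(m2,e1) \<in> ES ?A'"
  proof -
    have "{m2,e2} \<in> ?A'" using m(2) by (simp add: insert_commute)
    moreover have "{e2,e1} \<in> ?A'" by (simp add: insert_commute)
    ultimately show ?thesis using sim_E[OF w', of m2 e2 e1] by simp
  qed
  have u1: "(p,e2) \<in> ES ?A'" if "p \<in> U1" for p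
  proof -
    have "(p,m1) \<in> ES ?A' \<or> (p,e2) \<in> ES ?A'" using that EA' E_sym[OF w] unfolding U1_def by blast
    then show ?thesis using g1 E_trans by blast
  qed
  have u2: "(p,e1) \<in> ES ?A'" if "p \<in> U2" for p
  proof -
    have "(p,m2) \<in> ES ?A' \<or> (p,e1) \<in> ES ?A'" using that EA' E_sym[OF w] unfolding U2_def by blast
    then show ?thesis using g2 E_trans by blast
  qed
  have sub2: "P \<subseteq> ES ?A'"
  proof
    fix pq assume "pq \<in> P"
    then obtain p q where pq: "pq = (p,q)" and P: "(p,q) \<in> P" by (cases pq) auto
    have "(p,q) \<in> ES ?A'"
    proof -
      { assume "(p,q) \<in> ES A" then have ?thesis using EA' by blast }
      moreover
      { assume "p \<in> U1" "q \<in> U1" then have ?thesis using u1 E_sym[OF w'] E_trans by blast }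
      moreover
      { assume "p \<in> U2" "q \<in> U2" then have ?thesis using u2 E_sym[OF w'] E_trans by blast }
      moreover
      { assume "U1 \<inter> U2 \<noteq> {}" "p \<in> U1 \<union> U2" "q \<in> U1 \<union> U2"
        then obtain z where z: "z \<in> U1" "z \<in> U2" by blast
        have "(e2,e1) \<in> ES ?A'" using u1[OF z(1)] u2[OF z(2)] E_sym[OF w'] E_trans by blast
        then have "(e1,e2) \<in> ES ?A'" using E_sym[OF w'] by blast
        then have ?thesis using \<open>(e2,e1) \<in> ES ?A'\<close> u1 u2 E_sym[OF w'] E_trans \<open>p \<in> U1 \<union> U2\<close> \<open>q \<in> U1 \<union> U2\<close>
          by (meson UnE) }
      ultimately show ?thesis using P unfolding P_def by blast
    qed
    then show "pq \<in> ES ?A'" using pq by simp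
  qed
  show ?thesis using sub1 sub2 unfolding P_def by blast
qed

end


context fixes n :: nat and x :: "arc \<Rightarrow> real" begin
abbreviation "H2 \<equiv> half_arcs n x"
abbreviation "E2 A \<equiv> circ_equiv n x A"

definition shA :: "arc set set \<Rightarrow> arc \<Rightarrow> bool" where
  "shA A a \<longleftrightarrow> (\<exists>b. {a,b} \<in> A \<and> (a,b) \<in> circ_equiv n x A)"

definition NSet :: "arc set set \<Rightarrow> arc set set" where
  "NSet A = {L \<in> circuits n x A. \<not> shorted n x A L}"

lemma shA_nb: assumes w: "wfA H2 A" and a: "a \<in> H2" and ab: "{a,b} \<in> A"
  shows "shA A a \<longleftrightarrow> (a,b) \<in> E2 A"
proof
  assume "shA A a"
  then obtain c where c: "{a,c} \<in> A" "(a,c) \<in> E2 A" unfolding shA_def by blast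
  have "(c,b) \<in> E2 A" using nb_class[OF w E_refl[OF w a] c(1) ab] .
  then show "(a,b) \<in> E2 A" using c(2) E_trans by blast
next
  assume "(a,b) \<in> E2 A" then show "shA A a" unfolding shA_def using ab by blast
qed

lemma shorted_cls: assumes w: "wfA H2 A" and a: "a \<in> H2"
  shows "shorted n x A (E2 A``{a}) \<longleftrightarrow> shA A a"
proof -
  obtain b where ab: "{a,b} \<in> A" using nbr_ex[OF w a] by blast
  show ?thesis using shorted_iff[OF w a ab] shA_nb[OF w a ab] by simp
qed

lemma shA_cong: assumes w: "wfA H2 A" and ac: "(a,c) \<in> E2 A"
  shows "shA A a \<longleftrightarrow> shA A c"
proof -
  have a: "a \<in> H2" and c: "c \<in> H2" using E_sub ac by blast+
  have "E2 A``{a} = E2 A``{c}" using equiv_class_eq[OF E_equiv[OF w] ac] .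
  then show ?thesis using shorted_cls[OF w a] shorted_cls[OF w c] by simp
qed

lemma NS_eq: assumes w: "wfA H2 A"
  shows "NSet A = {E2 A``{a} | a. a \<in> H2 \<and> \<not> shA A a}"
proof
  show "NSet A \<subseteq> {E2 A``{a} | a. a \<in> H2 \<and> \<not> shA A a}"
  proof
    fix L assume "L \<in> NSet A"
    then have L: "L \<in> circuits n x A" "\<not> shorted n x A L" unfolding NSet_def by auto
    then obtain a where a: "a \<in> H2" "L = E2 A``{a}" unfolding circ_iff by blast
    then show "L \<in> {E2 A``{a} | a. a \<in> H2 \<and> \<not> shA A a}" using L(2) shorted_cls[OF w a(1)] by blast
  qed
  show "{E2 A``{a} | a. a \<in> H2 \<and> \<not> shA A a} \<subseteq> NSet A"
  proof
    fix L assume "L \<in> {E2 A``{a} | a. a \<in> H2 \<and> \<not> shA A a}"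
    then obtain a where a: "a \<in> H2" "L = E2 A``{a}" "\<not> shA A a" by blast
    have "L \<in> circuits n x A" unfolding circ_iff using a by blast
    then show "L \<in> NSet A" unfolding NSet_def using a shorted_cls[OF w a(1)] by blast
  qed
qed

lemma finite_NSet: "wfA H2 A \<Longrightarrow> finite (NSet A)"
  unfolding NSet_def using finite_circuits by simp

lemma cls_int: assumes w: "wfA H2 A" and a: "a \<in> H2"
  shows "E2 A``{a} \<inter> E2 A``{b} \<noteq> {} \<longleftrightarrow> (a,b) \<in> E2 A"
proof
  assume "E2 A``{a} \<inter> E2 A``{b} \<noteq> {}"
  then obtain z where "(a,z) \<in> E2 A" "(b,z) \<in> E2 A" by blast
  then show "(a,b) \<in> E2 A" using E_sym[OF w] E_trans by blast
next
  assume "(a,b) \<in> E2 A"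
  then have "b \<in> E2 A``{a}" "b \<in> E2 A``{b}" using E_refl[OF w] E_sub by blast+
  then show "E2 A``{a} \<inter> E2 A``{b} \<noteq> {}" by blast
qed

lemma dec_iff:
  assumes w: "wfA H2 A" and e: "e1 \<in> H2" "e2 \<in> H2" "e1 \<noteq> e2"
    and m: "{e1,m1} \<in> A" "{e2,m2} \<in> A"
  shows "decreases n x A {e1,e2} \<longleftrightarrow> (e2,m1) \<notin> E2 A \<and> \<not> ((e1,m1) \<in> E2 A \<and> (e2,m2) \<in> E2 A)"
proof -
  have m1H: "m1 \<in> H2" and m2H: "m2 \<in> H2" using wf_edge[OF w m(1)] wf_edge[OF w m(2)] by auto
  have x12: "(e1,m2) \<in> E2 A \<longleftrightarrow> (e2,m1) \<in> E2 A"
  proof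
    assume h: "(e1,m2) \<in> E2 A"
    have "{m2,e2} \<in> A" using m(2) by (simp add: insert_commute)
    then have "(m1,e2) \<in> E2 A" using nb_class[OF w h m(1)] by simp
    then show "(e2,m1) \<in> E2 A" using E_sym[OF w] by blast
  next
    assume h: "(e2,m1) \<in> E2 A"
    have "{m1,e1} \<in> A" using m(1) by (simp add: insert_commute)
    then have "(m2,e1) \<in> E2 A" using nb_class[OF w h m(2)] by simp
    then show "(e1,m2) \<in> E2 A" using E_sym[OF w] by blast
  qed
  have c1: "circuit_of n x A e2 \<noteq> dual_circuit n x A (circuit_of n x A e1) \<longleftrightarrow> (e2,m1) \<notin> E2 A"
    unfolding circuit_of_def dual_eq[OF w e(1) m(1)] using cls_eq[OF w e(2) m1H] by simp
  have c2: "circuit_of n x A e1 \<noteq> dual_circuit n x A (circuit_of n x A e2) \<longleftrightarrow> (e2,m1) \<notin> E2 A"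
    unfolding circuit_of_def dual_eq[OF w e(2) m(2)] using cls_eq[OF w e(1) m2H] x12 by simp
  have s1: "shorted n x A (circuit_of n x A e1) \<longleftrightarrow> (e1,m1) \<in> E2 A"
    unfolding circuit_of_def using shorted_iff[OF w e(1) m(1)] .
  have s2: "shorted n x A (circuit_of n x A e2) \<longleftrightarrow> (e2,m2) \<in> E2 A"
    unfolding circuit_of_def using shorted_iff[OF w e(2) m(2)] .
  have "decreases n x A {e1,e2} \<longleftrightarrow>
     (circuit_of n x A e2 \<noteq> dual_circuit n x A (circuit_of n x A e1) \<and>
      \<not> (shorted n x A (circuit_of n x A e1) \<and> shorted n x A (circuit_of n x A e2))) \<or>
     (circuit_of n x A e1 \<noteq> dual_circuit n x A (circuit_of n x A e2) \<and>
      \<not> (shorted n x A (circuit_of n x A e2) \<and> shorted n x A (circuit_of n x A e1)))"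
    (is "?L \<longleftrightarrow> ?R")
  proof
    assume ?L
    then obtain f1 f2 where f: "{e1,e2} = {f1,f2}" "f1 \<noteq> f2"
      "circuit_of n x A f2 \<noteq> dual_circuit n x A (circuit_of n x A f1)"
      "\<not> (shorted n x A (circuit_of n x A f1) \<and> shorted n x A (circuit_of n x A f2))"
      unfolding decreases_def by blast
    have "(f1 = e1 \<and> f2 = e2) \<or> (f1 = e2 \<and> f2 = e1)" using f(1) by (metis doubleton_eq_iff)
    then show ?R using f(3,4) by blast
  next
    assume ?R
    then show ?L unfolding decreases_def using e(3) by (metis insert_commute)
  qed
  then show ?thesis using c1 c2 s1 s2 by blast
qed

end


context fixes n :: nat and x :: "arc \<Rightarrow> real" begin
abbreviation "H3 \<equiv> half_arcs n x"
abbreviation "E3 A \<equiv> circ_equiv n x A"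

lemma split_img: "U \<subseteq> V \<Longrightarrow> {f a | a. a \<in> V \<and> P a} = {f a | a. a \<in> V - U \<and> P a} \<union> {f a | a. a \<in> U \<and> P a}"
  by blast

lemma cong_img: "(\<And>a. a \<notin> U \<Longrightarrow> f a = g a) \<Longrightarrow> (\<And>a. a \<notin> U \<Longrightarrow> P a = Q a) \<Longrightarrow>
   {f a | a. a \<in> V - U \<and> P a} = {g a | a. a \<in> V - U \<and> Q a}"
  by force

lemma card_split: "finite (X \<union> Y) \<Longrightarrow> (\<And>C. C \<in> X \<Longrightarrow> \<not> C \<subseteq> U) \<Longrightarrow> (\<And>C. C \<in> Y \<Longrightarrow> C \<subseteq> U)
  \<Longrightarrow> card (X \<union> Y) = card X + card Y"
proof -
  assume f: "finite (X \<union> Y)" and a: "\<And>C. C \<in> X \<Longrightarrow> \<not> C \<subseteq> U" and b: "\<And>C. C \<in> Y \<Longrightarrow> C \<subseteq> U"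
  have "X \<inter> Y = {}" using a b by blast
  moreover have "finite X" "finite Y" using f by auto
  ultimately show ?thesis by (simp add: card_Un_disjoint)
qed

lemma step_card:
  assumes w: "wfA H3 A" and e: "e1 \<in> H3" "e2 \<in> H3" "e1 \<noteq> e2"
  shows "card (NSet n x (insert {e1,e2} A)) + (if decreases n x A {e1,e2} then 2 else 0) = card (NSet n x A)"
proof -
  let ?A' = "insert {e1,e2} A"
  let ?E = "E3 A" and ?E' = "E3 ?A'"
  have w': "wfA H3 ?A'" using wf_insert[OF w e] .
  obtain m1 where m1: "{e1,m1} \<in> A" using nbr_ex[OF w e(1)] by blast
  obtain m2 where m2: "{e2,m2} \<in> A" using nbr_ex[OF w e(2)] by blast
  have m1H: "m1 \<in> H3" and m2H: "m2 \<in> H3" using wf_edge[OF w m1] wf_edge[OF w m2] by auto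
  define U1 where "U1 = ?E``{m1} \<union> ?E``{e2}"
  define U2 where "U2 = ?E``{e1} \<union> ?E``{m2}"
  have Ef: "(p,q) \<in> ?E' \<longleftrightarrow> (p,q) \<in> ?E \<or> (p \<in> U1 \<and> q \<in> U1) \<or> (p \<in> U2 \<and> q \<in> U2)
     \<or> (U1 \<inter> U2 \<noteq> {} \<and> p \<in> U1 \<union> U2 \<and> q \<in> U1 \<union> U2)" for p q
    unfolding U1_def U2_def by (rule E_new[OF w e m1 m2])
  have c1: "q \<in> U1 \<longleftrightarrow> p \<in> U1" if "(p,q) \<in> ?E" for p q
    unfolding U1_def using cls_closed[OF w that] by blast
  have c2: "q \<in> U2 \<longleftrightarrow> p \<in> U2" if "(p,q) \<in> ?E" for p q
    unfolding U2_def using cls_closed[OF w that] by blast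
  have e1U2: "e1 \<in> U2" unfolding U2_def using E_refl[OF w e(1)] by blast
  have e2U1: "e2 \<in> U1" unfolding U1_def using E_refl[OF w e(2)] by blast
  have UH: "U1 \<subseteq> H3" "U2 \<subseteq> H3" unfolding U1_def U2_def using E_sub by blast+
  have cls_out: "?E'``{a} = ?E``{a}" if "a \<notin> U1 \<union> U2" for a
    using that Ef by blast
  have cls_U1: "?E'``{a} = U1" if "a \<in> U1" "U1 \<inter> U2 = {}" for a
  proof -
    have "a \<notin> U2" using that by blast
    then show ?thesis using that Ef c1 by blast
  qed
  have cls_U2: "?E'``{a} = U2" if "a \<in> U2" "U1 \<inter> U2 = {}" for a
  proof -
    have "a \<notin> U1" using that by blast
    then show ?thesis using that Ef c2 by blast
  qed
  have cls_U: "?E'``{a} = U1 \<union> U2" if "a \<in> U1 \<union> U2" "U1 \<inter> U2 \<noteq> {}" for a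
  proof
    show "?E'``{a} \<subseteq> U1 \<union> U2"
    proof
      fix q assume "q \<in> ?E'``{a}"
      then have "(a,q) \<in> ?E'" by blast
      then show "q \<in> U1 \<union> U2" using Ef[of a q] that c1 c2 by blast
    qed
    show "U1 \<union> U2 \<subseteq> ?E'``{a}" using that Ef by blast
  qed
  have sh_out: "shA n x ?A' a \<longleftrightarrow> shA n x A a" if a: "a \<notin> U1 \<union> U2" for a
  proof -
    have ne: "a \<noteq> e1" "a \<noteq> e2" using a e1U2 e2U1 by blast+
    have "{a,b} \<in> ?A' \<longleftrightarrow> {a,b} \<in> A" for b
      using ne by (auto simp: doubleton_eq_iff)
    moreover have "(a,b) \<in> ?E' \<longleftrightarrow> (a,b) \<in> ?E" for b using a Ef by blast
    ultimately show ?thesis unfolding shA_def by simp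
  qed
  define X where "X = {?E``{a} | a. a \<in> H3 - (U1 \<union> U2) \<and> \<not> shA n x A a}"
  define Y where "Y = {?E``{a} | a. a \<in> U1 \<union> U2 \<and> \<not> shA n x A a}"
  define Y' where "Y' = {?E'``{a} | a. a \<in> U1 \<union> U2 \<and> \<not> shA n x ?A' a}"
  have UH': "U1 \<union> U2 \<subseteq> H3" using UH by blast
  have NS1: "NSet n x A = X \<union> Y" unfolding NS_eq[OF w] X_def Y_def by (rule split_img[OF UH'])
  have X': "X = {?E'``{a} | a. a \<in> H3 - (U1 \<union> U2) \<and> \<not> shA n x ?A' a}"
    unfolding X_def by (rule cong_img) (simp_all add: cls_out sh_out)
  have NS2: "NSet n x ?A' = X \<union> Y'" unfolding NS_eq[OF w'] X' Y'_def by (rule split_img[OF UH'])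
  have Xout: "\<not> C \<subseteq> U1 \<union> U2" if CX: "C \<in> X" for C
  proof -
    obtain a where a: "a \<in> H3" "a \<notin> U1 \<union> U2" "C = ?E``{a}" using CX unfolding X_def by blast
    have "a \<in> C" using E_refl[OF w a(1)] a(3) by simp
    then show ?thesis using a(2) by blast
  qed
  have Yin: "C \<subseteq> U1 \<union> U2" if CY: "C \<in> Y" for C
  proof -
    obtain a where a: "a \<in> U1 \<union> U2" "C = ?E``{a}" using CY unfolding Y_def by blast
    show ?thesis
    proof
      fix q assume "q \<in> C"
      then have "(a,q) \<in> ?E" using a(2) by simp
      then show "q \<in> U1 \<union> U2" using a(1) c1[of a q] c2[of a q] by blast
    qed
  qed
  have Y'in: "C \<subseteq> U1 \<union> U2" if CY: "C \<in> Y'" for C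
  proof -
    obtain a where a: "a \<in> U1 \<union> U2" "C = ?E'``{a}" using CY unfolding Y'_def by blast
    show ?thesis
    proof (cases "U1 \<inter> U2 = {}")
      case True
      then show ?thesis using a cls_U1[OF _ True] cls_U2[OF _ True] by (cases "a \<in> U1") auto
    next
      case False
      then show ?thesis using a cls_U[OF a(1) False] by simp
    qed
  qed
  have finA: "finite (NSet n x A)" and finA': "finite (NSet n x ?A')" using finite_NSet[OF w] finite_NSet[OF w'] by auto
  have cardA: "card (NSet n x A) = card X + card Y"
    unfolding NS1 by (rule card_split[OF finA[unfolded NS1] Xout Yin])
  have cardA': "card (NSet n x ?A') = card X + card Y'"
    unfolding NS2 by (rule card_split[OF finA'[unfolded NS2] Xout Y'in])
  define s1 where "s1 = ((e1,m1) \<in> ?E)"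
  define s2 where "s2 = ((e2,m2) \<in> ?E)"
  have sh_e1: "shA n x A e1 = s1" unfolding s1_def using shA_nb[OF w e(1) m1] .
  have sh_e2: "shA n x A e2 = s2" unfolding s2_def using shA_nb[OF w e(2) m2] .
  have sh_m1: "shA n x A m1 = s1"
  proof -
    have "{m1,e1} \<in> A" using m1 by (simp add: insert_commute)
    then show ?thesis unfolding s1_def using shA_nb[OF w m1H] E_sym[OF w] by blast
  qed
  have sh_m2: "shA n x A m2 = s2"
  proof -
    have "{m2,e2} \<in> A" using m2 by (simp add: insert_commute)
    then show ?thesis unfolding s2_def using shA_nb[OF w m2H] E_sym[OF w] by blast
  qed
  let ?L1 = "?E``{e1}" and ?M1 = "?E``{m1}" and ?L2 = "?E``{e2}" and ?M2 = "?E``{m2}"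
  have Yeq: "Y = (if s1 then {} else {?L1, ?M1}) \<union> (if s2 then {} else {?L2, ?M2})"
  proof
    show "Y \<subseteq> (if s1 then {} else {?L1, ?M1}) \<union> (if s2 then {} else {?L2, ?M2})"
    proof
      fix C assume "C \<in> Y"
      then obtain a where a: "a \<in> U1 \<union> U2" "C = ?E``{a}" "\<not> shA n x A a" unfolding Y_def by blast
      have "(m1,a) \<in> ?E \<or> (e2,a) \<in> ?E \<or> (e1,a) \<in> ?E \<or> (m2,a) \<in> ?E" using a(1) unfolding U1_def U2_def by blast
      moreover have "C = ?E``{r}" if "(r,a) \<in> ?E" for r
        using a(2) equiv_class_eq[OF E_equiv[OF w] that] by simp
      moreover have "shA n x A r = shA n x A a" if "(r,a) \<in> ?E" for r
        using shA_cong[OF w that] .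
      ultimately have "(C = ?M1 \<and> \<not> s1) \<or> (C = ?L2 \<and> \<not> s2) \<or> (C = ?L1 \<and> \<not> s1) \<or> (C = ?M2 \<and> \<not> s2)"
        using a(3) sh_e1 sh_e2 sh_m1 sh_m2 by metis
      then show "C \<in> (if s1 then {} else {?L1, ?M1}) \<union> (if s2 then {} else {?L2, ?M2})"
        by (elim disjE) simp_all
    qed
    have m1U: "m1 \<in> U1" and m2U: "m2 \<in> U2" unfolding U1_def U2_def using E_refl[OF w m1H] E_refl[OF w m2H] by blast+
    have inY: "?E``{r} \<in> Y" if "r \<in> U1 \<union> U2" "\<not> shA n x A r" for r
      unfolding Y_def using that by blast
    have "?L1 \<in> Y" if "\<not> s1" using inY[of e1] e1U2 sh_e1 that by blast
    moreover have "?M1 \<in> Y" if "\<not> s1" using inY[of m1] m1U sh_m1 that by blast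
    moreover have "?L2 \<in> Y" if "\<not> s2" using inY[of e2] e2U1 sh_e2 that by blast
    moreover have "?M2 \<in> Y" if "\<not> s2" using inY[of m2] m2U sh_m2 that by blast
    ultimately show "(if s1 then {} else {?L1, ?M1}) \<union> (if s2 then {} else {?L2, ?M2}) \<subseteq> Y"
      by simp
  qed
  have e12: "{e1,e2} \<in> ?A'" "{e2,e1} \<in> ?A'" by (auto simp: insert_commute)
  have Y'eq: "Y' = (if U1 \<inter> U2 = {} then {U1, U2} else {})"
  proof (cases "U1 \<inter> U2 = {}")
    case True
    have ns2: "\<not> shA n x ?A' e2"
    proof -
      have "(e2,e1) \<notin> ?E'" using Ef[of e2 e1] True e1U2 e2U1 c1[of e2 e1] by blast
      then show ?thesis using shA_nb[OF w' e(2) e12(2)] by blast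
    qed
    have ns1: "\<not> shA n x ?A' e1"
    proof -
      have "(e1,e2) \<notin> ?E'" using Ef[of e1 e2] True e1U2 e2U1 c2[of e1 e2] by blast
      then show ?thesis using shA_nb[OF w' e(1) e12(1)] by blast
    qed
    have "Y' = {U1, U2}"
    proof
      show "Y' \<subseteq> {U1, U2}"
      proof
        fix C assume "C \<in> Y'"
        then obtain a where a: "a \<in> U1 \<union> U2" "C = ?E'``{a}" unfolding Y'_def by blast
        then show "C \<in> {U1, U2}" using cls_U1[OF _ True] cls_U2[OF _ True] by blast
      qed
      show "{U1, U2} \<subseteq> Y'"
        unfolding Y'_def using cls_U1[OF e2U1 True] cls_U2[OF e1U2 True] ns1 ns2 e1U2 e2U1 by blast
    qed
    then show ?thesis using True by simp
  next
    case False
    have "(e1,e2) \<in> ?E'" using Ef[of e1 e2] False e1U2 e2U1 by blast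
    then have s: "shA n x ?A' e1" using shA_nb[OF w' e(1) e12(1)] by blast
    have "shA n x ?A' a" if "a \<in> U1 \<union> U2" for a
    proof -
      have "(e1,a) \<in> ?E'" using Ef[of e1 a] False e1U2 that by blast
      then show ?thesis using shA_cong[OF w'] s by blast
    qed
    then have "Y' = {}" unfolding Y'_def by blast
    then show ?thesis using False by simp
  qed
  have eqL1M1: "(?L1 = ?M1) = s1" unfolding s1_def using cls_eq[OF w e(1) m1H] .
  have eqL2M2: "(?L2 = ?M2) = s2" unfolding s2_def using cls_eq[OF w e(2) m2H] .
  have eqL1L2: "(?L1 = ?L2) = ((e1,e2) \<in> ?E)" using cls_eq[OF w e(1) e(2)] .
  have mm: "(m1,m2) \<in> ?E \<longleftrightarrow> (e1,e2) \<in> ?E"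
  proof
    assume h: "(m1,m2) \<in> ?E"
    have "{m1,e1} \<in> A" "{m2,e2} \<in> A" using m1 m2 by (simp_all add: insert_commute)
    then show "(e1,e2) \<in> ?E" using nb_class[OF w h] by blast
  next
    assume h: "(e1,e2) \<in> ?E"
    show "(m1,m2) \<in> ?E" using nb_class[OF w h m1 m2] .
  qed
  have eqM1M2: "(?M1 = ?M2) = ((e1,e2) \<in> ?E)" using cls_eq[OF w m1H m2H] mm by simp
  have x12: "(e1,m2) \<in> ?E \<longleftrightarrow> (e2,m1) \<in> ?E"
  proof
    assume h: "(e1,m2) \<in> ?E"
    have "{m2,e2} \<in> A" using m2 by (simp add: insert_commute)
    then have "(m1,e2) \<in> ?E" using nb_class[OF w h m1] by simp
    then show "(e2,m1) \<in> ?E" using E_sym[OF w] by blast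
  next
    assume h: "(e2,m1) \<in> ?E"
    have "{m1,e1} \<in> A" using m1 by (simp add: insert_commute)
    then have "(m2,e1) \<in> ?E" using nb_class[OF w h m2] by simp
    then show "(e1,m2) \<in> ?E" using E_sym[OF w] by blast
  qed
  have eqL2M1: "(?L2 = ?M1) = ((e2,m1) \<in> ?E)" using cls_eq[OF w e(2) m1H] .
  have eqL1M2: "(?L1 = ?M2) = ((e2,m1) \<in> ?E)" using cls_eq[OF w e(1) m2H] x12 by simp
  have disj: "(U1 \<inter> U2 = {}) \<longleftrightarrow> \<not> s1 \<and> \<not> s2 \<and> (e1,e2) \<notin> ?E"
  proof -
    have "U1 \<inter> U2 = {} \<longleftrightarrow> (?M1 \<inter> ?L1 = {} \<and> ?M1 \<inter> ?M2 = {} \<and> ?L2 \<inter> ?L1 = {} \<and> ?L2 \<inter> ?M2 = {})"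
      unfolding U1_def U2_def by blast
    also have "\<dots> \<longleftrightarrow> (m1,e1) \<notin> ?E \<and> (m1,m2) \<notin> ?E \<and> (e2,e1) \<notin> ?E \<and> (e2,m2) \<notin> ?E"
      using cls_int[OF w m1H] cls_int[OF w e(2)] by blast
    also have "\<dots> \<longleftrightarrow> \<not> s1 \<and> \<not> s2 \<and> (e1,e2) \<notin> ?E"
      unfolding s1_def s2_def using mm E_sym[OF w] by blast
    finally show ?thesis .
  qed
  have dec: "decreases n x A {e1,e2} \<longleftrightarrow> (e2,m1) \<notin> ?E \<and> \<not> (s1 \<and> s2)"
    unfolding s1_def s2_def using dec_iff[OF w e m1 m2] .
  have U1ne: "U1 \<noteq> U2" if "U1 \<inter> U2 = {}" using that e1U2 by blast
  have t1: "(e2,m1) \<in> ?E \<Longrightarrow> s1 \<Longrightarrow> s2"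
  proof -
    assume a1: "(e2,m1) \<in> ?E" and a2: s1
    have "(e1,e2) \<in> ?E" using a1 a2 E_sym[OF w] E_trans unfolding s1_def by blast
    then have "(m1,m2) \<in> ?E" using mm by blast
    then show s2 using a1 E_trans unfolding s2_def by blast
  qed
  have t2: "(e2,m1) \<in> ?E \<Longrightarrow> s2 \<Longrightarrow> s1"
  proof -
    assume a1: "(e2,m1) \<in> ?E" and a2: s2
    have "(m2,m1) \<in> ?E" using a1 a2 E_sym[OF w] E_trans unfolding s2_def by blast
    then have "(e1,e2) \<in> ?E" using mm E_sym[OF w] by blast
    then show s1 using a1 E_trans unfolding s1_def by blast
  qed
  have t3: "(e2,m1) \<in> ?E \<Longrightarrow> (e1,e2) \<in> ?E \<Longrightarrow> s1"
    unfolding s1_def using E_trans by blast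
  have "card Y' + (if decreases n x A {e1,e2} then 2 else 0) = card Y"
  proof (cases "U1 \<inter> U2 = {}")
    case True
    then have ns: "\<not> s1" "\<not> s2" "(e1,e2) \<notin> ?E" using disj by blast+
    show ?thesis
    proof (cases "(e2,m1) \<in> ?E")
      case True
      then show ?thesis using ns \<open>U1 \<inter> U2 = {}\<close> Yeq Y'eq U1ne dec eqL1M1 eqL2M2 eqL1L2 eqM1M2 eqL2M1 eqL1M2
        by (simp add: insert_commute)
    next
      case False
      then show ?thesis using ns \<open>U1 \<inter> U2 = {}\<close> Yeq Y'eq U1ne dec eqL1M1 eqL2M2 eqL1L2 eqM1M2 eqL2M1 eqL1M2
        by simp
    qed
  next
    case False
    then have Y'0: "Y' = {}" using Y'eq by simp
    show ?thesis
    proof (cases s1)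
      case True
      show ?thesis
      proof (cases s2)
        case True
        then show ?thesis using \<open>s1\<close> Y'0 Yeq dec by simp
      next
        case False
        then have "(e2,m1) \<notin> ?E" using t1 \<open>s1\<close> by blast
        then show ?thesis using \<open>s1\<close> False Y'0 Yeq dec eqL2M2 by simp
      qed
    next
      case ns1: False
      show ?thesis
      proof (cases s2)
        case True
        then have "(e2,m1) \<notin> ?E" using t2 ns1 by blast
        then show ?thesis using ns1 True Y'0 Yeq dec eqL1M1 by simp
      next
        case ns2: False
        then have "(e1,e2) \<in> ?E" using disj False ns1 by blast
        then have "(e2,m1) \<notin> ?E" using t3 ns1 by blast
        then show ?thesis using ns1 ns2 \<open>(e1,e2) \<in> ?E\<close> Y'0 Yeq dec eqL1M1 eqL1L2 eqM1M2 by (simp add: card_insert_if)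
      qed
    qed
  qed
  then show ?thesis using cardA cardA' by simp
qed

end



lemma finite_arcs: "finite (arcs n)"
proof -
  have "arcs n \<subseteq> verts n \<times> verts n" unfolding arcs_def by auto
  moreover have "finite (verts n \<times> verts n)" unfolding verts_def by simp
  ultimately show ?thesis by (rule finite_subset)
qed

lemma pol_off: "y \<in> polytope n \<Longrightarrow> e \<notin> arcs n \<Longrightarrow> y e = 0" unfolding polytope_def by blast
lemma pol_out: "y \<in> polytope n \<Longrightarrow> u \<in> verts n \<Longrightarrow> sum y (out_arcs n u) = 1" unfolding polytope_def by blast
lemma pol_in: "y \<in> polytope n \<Longrightarrow> u \<in> verts n \<Longrightarrow> sum y (in_arcs n u) = 1" unfolding polytope_def by blast
lemma pol_cut: "y \<in> polytope n \<Longrightarrow> S \<in> subtour_sets n \<Longrightarrow> sum y (out_cut n S) \<ge> 1" unfolding polytope_def by blast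
lemma pol_nn: "y \<in> polytope n \<Longrightarrow> e \<in> arcs n \<Longrightarrow> y e \<ge> 0" unfolding polytope_def by blast

context
  fixes n :: nat and x :: "arc \<Rightarrow> real"
  assumes P: "x \<in> polytope n" and half: "\<forall>e \<in> arcs n. x e = 0 \<or> x e = 1/2"
begin
abbreviation "H4 \<equiv> half_arcs n x"
abbreviation "E4 A \<equiv> circ_equiv n x A"

lemma H_sub: "H4 \<subseteq> arcs n" unfolding half_arcs_def by auto

lemma finite_H: "finite H4" using finite_subset[OF H_sub finite_arcs] .

lemma pr_sub: "pr n x F \<subseteq> H4" unfolding pr_def by auto

lemma sum_half: assumes F: "F \<subseteq> arcs n"
  shows "sum x F = real (card (pr n x F)) / 2"
proof -
  have fin: "finite F" using finite_subset[OF F finite_arcs] .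
  have "sum x F = sum x (F \<inter> H4) + sum x (F - H4)" using sum.Int_Diff[OF fin] .
  moreover have "sum x (F - H4) = 0"
  proof (rule sum.neutral, rule ballI)
    fix e assume "e \<in> F - H4"
    then show "x e = 0" using F half unfolding half_arcs_def by auto
  qed
  moreover have "sum x (F \<inter> H4) = real (card (F \<inter> H4)) / 2"
  proof -
    have "sum x (F \<inter> H4) = sum (\<lambda>e. 1/2) (F \<inter> H4)"
      by (rule sum.cong) (auto simp: half_arcs_def)
    then show ?thesis by simp
  qed
  ultimately show ?thesis unfolding pr_def by simp
qed

lemma pr_two: assumes F: "F \<subseteq> arcs n" and s: "sum x F = 1"
  shows "\<exists>a b. a \<noteq> b \<and> a \<in> H4 \<and> b \<in> H4 \<and> pr n x F = {a,b}"
proof -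
  have "card (pr n x F) = 2" using sum_half[OF F] s by simp
  then obtain a b where "a \<noteq> b" "pr n x F = {a,b}" by (auto simp: card_2_iff)
  then show ?thesis using pr_sub by blast
qed

lemma out_sub: "out_arcs n u \<subseteq> arcs n" unfolding out_arcs_def by auto
lemma in_sub: "in_arcs n u \<subseteq> arcs n" unfolding in_arcs_def by auto
lemma cut_sub: "out_cut n S \<subseteq> arcs n" unfolding out_cut_def by auto

lemma deg_out: "u \<in> verts n \<Longrightarrow> sum x (out_arcs n u) = 1" using pol_out[OF P] by blast
lemma deg_in: "u \<in> verts n \<Longrightarrow> sum x (in_arcs n u) = 1" using pol_in[OF P] by blast

lemma D_two: "F \<in> Dset n x \<Longrightarrow> \<exists>a b. a \<noteq> b \<and> a \<in> H4 \<and> b \<in> H4 \<and> F = {a,b}"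
proof -
  assume "F \<in> Dset n x"
  then obtain u where u: "u \<in> verts n" "F = pr n x (out_arcs n u) \<or> F = pr n x (in_arcs n u)"
    unfolding Dset_def by blast
  then show ?thesis using pr_two[OF out_sub deg_out[OF u(1)]] pr_two[OF in_sub deg_in[OF u(1)]] by metis
qed

lemma T_two: "F \<in> Tset n x \<Longrightarrow> \<exists>a b. a \<noteq> b \<and> a \<in> H4 \<and> b \<in> H4 \<and> F = {a,b}"
proof -
  assume "F \<in> Tset n x"
  then obtain S where S: "sum x (out_cut n S) = 1" "F = pr n x (out_cut n S)"
    unfolding Tset_def tight_sets_def by blast
  then show ?thesis using pr_two[OF cut_sub S(1)] by simp
qed

lemma arc_verts: "e \<in> arcs n \<Longrightarrow> fst e \<in> verts n \<and> snd e \<in> verts n"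
  unfolding arcs_def by auto

definition oarc :: "arc \<Rightarrow> arc" where
  "oarc a = (SOME b. pr n x (out_arcs n (fst a)) = {a,b} \<and> b \<noteq> a)"
definition iarc :: "arc \<Rightarrow> arc" where
  "iarc a = (SOME b. pr n x (in_arcs n (snd a)) = {a,b} \<and> b \<noteq> a)"

lemma oarc_props: assumes a: "a \<in> H4"
  shows "pr n x (out_arcs n (fst a)) = {a, oarc a} \<and> oarc a \<noteq> a"
proof -
  have ar: "a \<in> arcs n" using a H_sub by blast
  have u: "fst a \<in> verts n" using arc_verts[OF ar] by blast
  obtain p q where pq: "p \<noteq> q" "pr n x (out_arcs n (fst a)) = {p,q}" using pr_two[OF out_sub deg_out[OF u]] by blast
  have "a \<in> pr n x (out_arcs n (fst a))" using a ar unfolding pr_def out_arcs_def by auto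
  then have "a = p \<or> a = q" using pq(2) by blast
  then have "\<exists>b. pr n x (out_arcs n (fst a)) = {a,b} \<and> b \<noteq> a"
  proof
    assume "a = p" then show ?thesis using pq by blast
  next
    assume "a = q" then have "pr n x (out_arcs n (fst a)) = {a,p} \<and> p \<noteq> a" using pq by (simp add: insert_commute)
    then show ?thesis by blast
  qed
  then show ?thesis unfolding oarc_def by (rule someI_ex)
qed

lemma iarc_props: assumes a: "a \<in> H4"
  shows "pr n x (in_arcs n (snd a)) = {a, iarc a} \<and> iarc a \<noteq> a"
proof -
  have ar: "a \<in> arcs n" using a H_sub by blast
  have u: "snd a \<in> verts n" using arc_verts[OF ar] by blast
  obtain p q where pq: "p \<noteq> q" "pr n x (in_arcs n (snd a)) = {p,q}" using pr_two[OF in_sub deg_in[OF u]] by blast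
  have "a \<in> pr n x (in_arcs n (snd a))" using a ar unfolding pr_def in_arcs_def by auto
  then have "a = p \<or> a = q" using pq(2) by blast
  then have "\<exists>b. pr n x (in_arcs n (snd a)) = {a,b} \<and> b \<noteq> a"
  proof
    assume "a = p" then show ?thesis using pq by blast
  next
    assume "a = q" then have "pr n x (in_arcs n (snd a)) = {a,p} \<and> p \<noteq> a" using pq by (simp add: insert_commute)
    then show ?thesis by blast
  qed
  then show ?thesis unfolding iarc_def by (rule someI_ex)
qed

lemma oarc_H: "a \<in> H4 \<Longrightarrow> oarc a \<in> H4" using oarc_props pr_sub by blast
lemma iarc_H: "a \<in> H4 \<Longrightarrow> iarc a \<in> H4" using iarc_props pr_sub by blast

lemma oarc_fst: "a \<in> H4 \<Longrightarrow> fst (oarc a) = fst a"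
  using oarc_props[of a] unfolding pr_def out_arcs_def by blast
lemma iarc_snd: "a \<in> H4 \<Longrightarrow> snd (iarc a) = snd a"
  using iarc_props[of a] unfolding pr_def in_arcs_def by blast

lemma oarc_oo: assumes a: "a \<in> H4" shows "oarc (oarc a) = a"
proof -
  have b: "oarc a \<in> H4" using oarc_H[OF a] .
  have "{oarc a, oarc (oarc a)} = {a, oarc a}" using oarc_props[OF b] oarc_props[OF a] oarc_fst[OF a] by simp
  moreover have "oarc (oarc a) \<noteq> oarc a" using oarc_props[OF b] by blast
  ultimately show ?thesis by (auto simp: doubleton_eq_iff)
qed

lemma iarc_ii: assumes a: "a \<in> H4" shows "iarc (iarc a) = a"
proof -
  have b: "iarc a \<in> H4" using iarc_H[OF a] .
  have "{iarc a, iarc (iarc a)} = {a, iarc a}" using iarc_props[OF b] iarc_props[OF a] iarc_snd[OF a] by simp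
  moreover have "iarc (iarc a) \<noteq> iarc a" using iarc_props[OF b] by blast
  ultimately show ?thesis by (auto simp: doubleton_eq_iff)
qed

lemma D_nbr: assumes a: "a \<in> H4" and ab: "{a,b} \<in> Dset n x"
  shows "b = oarc a \<or> b = iarc a"
proof -
  have ne: "a \<noteq> b" using D_two[OF ab] by (auto simp: doubleton_eq_iff)
  from ab obtain u where u: "{a,b} = pr n x (out_arcs n u) \<or> {a,b} = pr n x (in_arcs n u)"
    unfolding Dset_def by blast
  then show ?thesis
  proof
    assume h: "{a,b} = pr n x (out_arcs n u)"
    then have "fst a = u" unfolding pr_def out_arcs_def by blast
    then have "{a,b} = {a, oarc a}" using h oarc_props[OF a] by simp
    then show ?thesis using ne by (auto simp: doubleton_eq_iff)
  next
    assume h: "{a,b} = pr n x (in_arcs n u)"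
    then have "snd a = u" unfolding pr_def in_arcs_def by blast
    then have "{a,b} = {a, iarc a}" using h iarc_props[OF a] by simp
    then show ?thesis using ne by (auto simp: doubleton_eq_iff)
  qed
qed

lemma D_oo: assumes a: "a \<in> H4" shows "{a, oarc a} \<in> Dset n x"
proof -
  have "fst a \<in> verts n" using arc_verts a H_sub by blast
  then show ?thesis using oarc_props[OF a] unfolding Dset_def by blast
qed

lemma D_ii: assumes a: "a \<in> H4" shows "{a, iarc a} \<in> Dset n x"
proof -
  have "snd a \<in> verts n" using arc_verts a H_sub by blast
  then show ?thesis using iarc_props[OF a] unfolding Dset_def by blast
qed

lemma wf_A: assumes "Dset n x \<subseteq> A" "A \<subseteq> Dset n x \<union> Tset n x" shows "wfA H4 A"
  unfolding wfA_def
proof (intro conjI ballI)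
  show "finite H4" by (rule finite_H)
  fix F assume "F \<in> A" then show "\<exists>a b. a \<noteq> b \<and> a \<in> H4 \<and> b \<in> H4 \<and> F = {a, b}"
    using assms D_two T_two by blast
next
  fix a assume "a \<in> H4" then show "\<exists>b. {a, b} \<in> A" using D_oo assms by blast
qed


definition gg :: "arc \<Rightarrow> arc" where "gg a = iarc (oarc a)"

lemma gg_H: "a \<in> H4 \<Longrightarrow> gg a \<in> H4" unfolding gg_def using oarc_H iarc_H by blast

lemma gg_inj: "inj_on gg H4"
proof (rule inj_onI)
  fix a b assume a: "a \<in> H4" and b: "b \<in> H4" and e: "gg a = gg b"
  then have "iarc (iarc (oarc a)) = iarc (iarc (oarc b))" unfolding gg_def by simp
  then have "oarc a = oarc b" using iarc_ii[OF oarc_H[OF a]] iarc_ii[OF oarc_H[OF b]] by simp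
  then have "oarc (oarc a) = oarc (oarc b)" by simp
  then show "a = b" using oarc_oo[OF a] oarc_oo[OF b] by simp
qed

lemma ggpow_H: "a \<in> H4 \<Longrightarrow> (gg ^^ k) a \<in> H4"
  by (induct k) (auto simp: gg_H)

lemma ggpow_inj: "inj_on (gg ^^ k) H4"
proof (induct k)
  case 0 then show ?case by simp
next
  case (Suc k)
  have "inj_on ((gg ^^ k) \<circ> gg) H4"
  proof (rule comp_inj_on[OF gg_inj])
    have sub: "gg ` H4 \<subseteq> H4" using gg_H by blast
    show "inj_on (gg ^^ k) (gg ` H4)" by (rule inj_on_subset[OF Suc sub])
  qed
  moreover have "gg ^^ Suc k = (gg ^^ k) \<circ> gg" by (rule funpow_Suc_right)
  ultimately show ?case by (simp only:)
qed

lemma gg_period: assumes c: "c \<in> H4" shows "\<exists>p>0. (gg ^^ p) c = c"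
proof -
  let ?f = "\<lambda>k. (gg ^^ k) c"
  have "\<not> inj_on ?f {0..card H4}"
  proof
    assume "inj_on ?f {0..card H4}"
    moreover have "?f ` {0..card H4} \<subseteq> H4" using ggpow_H[OF c] by blast
    ultimately have "card {0..card H4} \<le> card H4" using card_inj_on_le finite_H by blast
    then show False by simp
  qed
  then obtain i j where ij: "i \<noteq> j" "?f i = ?f j" unfolding inj_on_def by blast
  have "\<exists>i j. i < j \<and> ?f i = ?f j"
  proof (cases "i < j")
    case True then show ?thesis using ij by blast
  next
    case False then have "j < i" using ij by simp
    then show ?thesis using ij by metis
  qed
  then obtain i j where ij: "i < j" "?f i = ?f j" by blast
  have "(gg ^^ j) c = (gg ^^ i) ((gg ^^ (j - i)) c)"
    using ij(1) by (metis funpow_add le_add_diff_inverse less_imp_le comp_apply)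
  then have "(gg ^^ i) ((gg ^^ (j - i)) c) = (gg ^^ i) c" using ij(2) by simp
  then have "(gg ^^ (j - i)) c = c" using ggpow_inj[of i] ggpow_H c unfolding inj_on_def by blast
  then show ?thesis using ij(1) by (intro exI[of _ "j - i"]) simp
qed

lemma oarc_not_orbit: "a \<in> H4 \<Longrightarrow> oarc a \<noteq> (gg ^^ k) a"
proof (induct k arbitrary: a rule: less_induct)
  case (less k)
  note a = less.prems
  show ?case
  proof (cases k)
    case 0 then show ?thesis using oarc_props[OF a] by simp
  next
    case (Suc k1)
    show ?thesis
    proof (cases k1)
      case 0
      then have "(gg ^^ k) a = iarc (oarc a)" using Suc by (simp add: gg_def)
      moreover have "iarc (oarc a) \<noteq> oarc a" using iarc_props[OF oarc_H[OF a]] by blast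
      ultimately show ?thesis by simp
    next
      case (Suc k2)
      note kk = \<open>k = Suc k1\<close> Suc
      show ?thesis
      proof
        assume h: "oarc a = (gg ^^ k) a"
        have ga: "gg a \<in> H4" using gg_H[OF a] .
        have "gg (oarc (gg a)) = iarc (gg a)" by (simp only: gg_def[of "oarc (gg a)"] oarc_oo[OF ga])
        also have "\<dots> = oarc a" unfolding gg_def using iarc_ii[OF oarc_H[OF a]] by simp
        also have "\<dots> = gg ((gg ^^ k1) a)" using h kk by (simp add: funpow_swap1)
        finally have "oarc (gg a) = (gg ^^ k1) a"
          using gg_inj oarc_H[OF ga] ggpow_H[OF a] unfolding inj_on_def by blast
        also have "\<dots> = (gg ^^ k2) (gg a)" using kk by (simp add: funpow_swap1)
        finally have "oarc (gg a) = (gg ^^ k2) (gg a)" .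
        moreover have "k2 < k" using kk by simp
        ultimately show False using less.hyps[OF _ ga] by blast
      qed
    qed
  qed
qed

lemma D_wf: "wfA H4 (Dset n x)" by (rule wf_A) auto

lemma D_sim: assumes ac: "(a,c) \<in> sim_rel n x (Dset n x)"
  shows "\<exists>k. c = (gg ^^ k) a"
proof -
  obtain b where b: "{a,b} \<in> Dset n x" "{b,c} \<in> Dset n x" using ac sim_iff[OF D_wf] by blast
  have a: "a \<in> H4" and bH: "b \<in> H4" using wf_edge[OF D_wf b(1)] by auto
  have "c = oarc b \<or> c = iarc b" using D_nbr[OF bH b(2)] .
  moreover have "b = oarc a \<or> b = iarc a" using D_nbr[OF a b(1)] .
  ultimately have "c = a \<or> c = gg a \<or> gg c = a"
  proof (elim disjE)
    assume "c = oarc b" "b = oarc a" then show ?thesis using oarc_oo[OF a] by simp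
  next
    assume "c = iarc b" "b = oarc a" then show ?thesis unfolding gg_def by simp
  next
    assume "c = oarc b" "b = iarc a"
    then have "gg c = iarc (oarc (oarc (iarc a)))" unfolding gg_def by simp
    also have "\<dots> = a" using oarc_oo[OF iarc_H[OF a]] iarc_ii[OF a] by simp
    finally show ?thesis by simp
  next
    assume "c = iarc b" "b = iarc a" then show ?thesis using iarc_ii[OF a] by simp
  qed
  then show ?thesis
  proof (elim disjE)
    assume "c = a" then show ?thesis by (intro exI[of _ 0]) simp
  next
    assume "c = gg a" then show ?thesis by (intro exI[of _ 1]) simp
  next
    assume h: "gg c = a"
    have cH: "c \<in> H4" using wf_edge[OF D_wf b(2)] by auto
    obtain p where p: "p > 0" "(gg ^^ p) c = c" using gg_period[OF cH] by blast
    obtain q where q: "p = Suc q" using p(1) by (cases p) auto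
    have "(gg ^^ p) c = (gg ^^ q) (gg c)" unfolding q by (simp add: funpow_swap1)
    then have "c = (gg ^^ q) a" using p(2) h by simp
    then show ?thesis by blast
  qed
qed

lemma D_E: assumes "(a,c) \<in> E4 (Dset n x)" shows "\<exists>k. c = (gg ^^ k) a"
proof -
  have "(a,c) \<in> (sim_rel n x (Dset n x))\<^sup>+" using assms unfolding circ_equiv_def .
  then show ?thesis
  proof (induct rule: trancl_induct)
    case (base y) then show ?case by (rule D_sim)
  next
    case (step y z)
    obtain k where k: "y = (gg ^^ k) a" using step(3) by blast
    obtain j where j: "z = (gg ^^ j) y" using D_sim[OF step(2)] by blast
    have "z = (gg ^^ (j + k)) a" using j k by (simp add: funpow_add)
    then show ?case by blast
  qed
qed

lemma D_noshort: assumes a: "a \<in> H4" shows "\<not> shA n x (Dset n x) a"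
proof
  assume "shA n x (Dset n x) a"
  then have "(a, oarc a) \<in> E4 (Dset n x)" using shA_nb[OF D_wf a D_oo[OF a]] by blast
  then obtain k where "oarc a = (gg ^^ k) a" using D_E by blast
  then show False using oarc_not_orbit[OF a] by blast
qed

lemma NSet_D: "NSet n x (Dset n x) = circuits n x (Dset n x)"
proof -
  have "\<not> shorted n x (Dset n x) L" if LC: "L \<in> circuits n x (Dset n x)" for L
  proof -
    obtain a where a: "a \<in> H4" "L = E4 (Dset n x) `` {a}" using LC unfolding circ_iff by blast
    show ?thesis using a shorted_cls[OF D_wf a(1)] D_noshort[OF a(1)] by simp
  qed
  then show ?thesis unfolding NSet_def by blast
qed


lemma sum_to_pr: assumes F: "F \<subseteq> arcs n" and f: "\<And>e. e \<notin> H4 \<Longrightarrow> f e = 0"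
  shows "sum f F = sum f (pr n x F)"
proof -
  have fin: "finite F" using finite_subset[OF F finite_arcs] .
  have "sum f F = sum f (F \<inter> H4) + sum f (F - H4)" using sum.Int_Diff[OF fin] .
  moreover have "sum f (F - H4) = 0" using f by (intro sum.neutral) blast
  ultimately show ?thesis unfolding pr_def by simp
qed

lemma A_wf: "wfA H4 (Dset n x \<union> Tset n x)" by (rule wf_A) auto

lemma out_in_D: "u \<in> verts n \<Longrightarrow> pr n x (out_arcs n u) \<in> Dset n x \<and> pr n x (in_arcs n u) \<in> Dset n x"
  unfolding Dset_def by (intro conjI UnI1 UnI2) (rule CollectI, rule exI[of _ u], simp)+

lemma cut_T: "S \<in> subtour_sets n \<Longrightarrow> sum x (out_cut n S) = 1 \<Longrightarrow> pr n x (out_cut n S) \<in> Tset n x"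
proof -
  assume "S \<in> subtour_sets n" "sum x (out_cut n S) = 1"
  then have "S \<in> tight_sets n x" unfolding tight_sets_def by simp
  then show ?thesis unfolding Tset_def mem_Collect_eq by (intro exI[where x=S]) simp
qed

lemma x_zero: "e \<notin> H4 \<Longrightarrow> x e = 0"
proof -
  assume e: "e \<notin> H4"
  show "x e = 0"
  proof (cases "e \<in> arcs n")
    case True then show ?thesis using half e unfolding half_arcs_def by auto
  next
    case False then show ?thesis using pol_off[OF P] by blast
  qed
qed

lemma x_half: "e \<in> H4 \<Longrightarrow> x e = 1/2" unfolding half_arcs_def by simp

lemma ext_if:
  assumes allsh: "\<forall>L \<in> circuits n x (Dset n x \<union> Tset n x). shorted n x (Dset n x \<union> Tset n x) L"
  shows "is_extreme_point x (polytope n)"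
  unfolding is_extreme_point_def
proof (intro conjI notI)
  show "x \<in> polytope n" by (rule P)
next
  let ?A = "Dset n x \<union> Tset n x"
  assume "\<exists>y\<in>polytope n. \<exists>z\<in>polytope n. y \<noteq> z \<and> (\<exists>l. 0 < l \<and> l < 1 \<and> x = (\<lambda>e. l * y e + (1 - l) * z e))"
  then obtain y z l where y: "y \<in> polytope n" and z: "z \<in> polytope n" and yz: "y \<noteq> z"
    and l: "0 < l" "l < 1" and xe: "x = (\<lambda>e. l * y e + (1 - l) * z e)" by blast
  have xe': "x e = l * y e + (1 - l) * z e" for e using xe by simp
  define d where "d e = y e - z e" for e
  have d0: "d e = 0" if e: "e \<notin> H4" for e
  proof (cases "e \<in> arcs n")
    case False
    then have "y e = 0" "z e = 0" using pol_off[OF y] pol_off[OF z] by blast+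
    then show ?thesis unfolding d_def by simp
  next
    case True
    have ye: "y e \<ge> 0" and ze: "z e \<ge> 0" using pol_nn[OF y True] pol_nn[OF z True] by blast+
    have "l * y e + (1 - l) * z e = 0" using x_zero[OF e] xe' by simp
    moreover have "l * y e \<ge> 0" "(1 - l) * z e \<ge> 0" using ye ze l by simp_all
    ultimately have "l * y e = 0" "(1 - l) * z e = 0" by linarith+
    then have "y e = 0" "z e = 0" using l by simp_all
    then show ?thesis unfolding d_def by simp
  qed
  have sumd: "sum d F' = sum d (pr n x F')" if "F' \<subseteq> arcs n" for F'
    by (rule sum_to_pr[OF that]) (rule d0)
  have sumd_diff: "sum d F' = sum y F' - sum z F'" for F' unfolding d_def by (simp add: sum_subtractf)
  have dA: "sum d F = 0" if F: "F \<in> ?A" for F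
  proof -
    from F show ?thesis
    proof
      assume "F \<in> Dset n x"
      then obtain u where u: "u \<in> verts n" "F = pr n x (out_arcs n u) \<or> F = pr n x (in_arcs n u)"
        unfolding Dset_def by blast
      have "sum y (out_arcs n u) = 1" "sum z (out_arcs n u) = 1" "sum y (in_arcs n u) = 1" "sum z (in_arcs n u) = 1"
        using pol_out[OF y u(1)] pol_out[OF z u(1)] pol_in[OF y u(1)] pol_in[OF z u(1)] by blast+
      then have "sum d (out_arcs n u) = 0" "sum d (in_arcs n u) = 0" using sumd_diff by simp_all
      moreover have "sum d (pr n x (out_arcs n u)) = sum d (out_arcs n u)"
        "sum d (pr n x (in_arcs n u)) = sum d (in_arcs n u)"
        using sumd[OF out_sub, of u] sumd[OF in_sub, of u] by simp_all
      ultimately show ?thesis using u(2) by auto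
    next
      assume "F \<in> Tset n x"
      then obtain S where S: "S \<in> subtour_sets n" "sum x (out_cut n S) = 1" "F = pr n x (out_cut n S)"
        unfolding Tset_def tight_sets_def by blast
      let ?Y = "sum y (out_cut n S)" and ?Z = "sum z (out_cut n S)"
      have Y: "?Y \<ge> 1" and Z: "?Z \<ge> 1" using pol_cut[OF y S(1)] pol_cut[OF z S(1)] by blast+
      have "sum x (out_cut n S) = l * ?Y + (1 - l) * ?Z"
        unfolding xe' by (simp add: sum.distrib sum_distrib_left)
      then have eq: "l * ?Y + (1 - l) * ?Z = 1" using S(2) by simp
      have "l * (?Y - 1) \<ge> 0" "(1 - l) * (?Z - 1) \<ge> 0" using Y Z l by simp_all
      moreover have "l * (?Y - 1) + (1 - l) * (?Z - 1) = 0" using eq by (simp add: algebra_simps)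
      ultimately have "l * (?Y - 1) = 0" "(1 - l) * (?Z - 1) = 0" by linarith+
      then have "?Y = 1" "?Z = 1" using l by simp_all
      then have "sum d (out_cut n S) = 0" using sumd_diff by simp
      moreover have "sum d (pr n x (out_cut n S)) = sum d (out_cut n S)"
        using sumd[OF cut_sub, of S] by simp
      ultimately show ?thesis using S(3) by simp
    qed
  qed
  have dpq: "d p + d q = 0" if "p \<noteq> q" "{p,q} \<in> ?A" for p q
  proof -
    have "sum d {p,q} = d p + d q" using that(1) by (simp add: sum.insert)
    then show ?thesis using dA[OF that(2)] by simp
  qed
  have dsim: "d a = d c" if ac: "(a,c) \<in> sim_rel n x ?A" for a c
  proof -
    obtain b where b: "{a,b} \<in> ?A" "{b,c} \<in> ?A" using ac unfolding sim_iff[OF A_wf] by blast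
    have ab: "a \<noteq> b" and bc: "b \<noteq> c" using wf_edge[OF A_wf b(1)] wf_edge[OF A_wf b(2)] by auto
    have "d a + d b = 0" using dpq[OF ab b(1)] .
    moreover have "d b + d c = 0" using dpq[OF bc b(2)] .
    ultimately show ?thesis by linarith
  qed
  have dE: "d a = d c" if "(a,c) \<in> E4 ?A" for a c
  proof -
    have "(a,c) \<in> (sim_rel n x ?A)\<^sup>+" using that unfolding circ_equiv_def .
    then show ?thesis
    proof (induct rule: trancl_induct)
      case (base y) then show ?case using dsim by blast
    next
      case (step y z) then show ?case using dsim by simp
    qed
  qed
  have dH: "d a = 0" if a: "a \<in> H4" for a
  proof -
    obtain b where ab: "{a,b} \<in> ?A" using nbr_ex[OF A_wf a] by blast
    have "E4 ?A `` {a} \<in> circuits n x ?A" unfolding circ_iff using a by blast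
    then have "shorted n x ?A (E4 ?A `` {a})" using allsh by blast
    then have "(a,b) \<in> E4 ?A" using shorted_iff[OF A_wf a ab] by blast
    then have "d a = d b" using dE by blast
    moreover have "d a + d b = 0" using dpq[OF _ ab] wf_edge[OF A_wf ab] by blast
    ultimately show ?thesis by simp
  qed
  have "y = z"
  proof
    fix e show "y e = z e" using dH[of e] d0[of e] unfolding d_def by (cases "e \<in> H4") auto
  qed
  then show False using yz by blast
qed


lemma ext_only:
  assumes L: "L \<in> circuits n x (Dset n x \<union> Tset n x)" and ns: "\<not> shorted n x (Dset n x \<union> Tset n x) L"
  shows "\<not> is_extreme_point x (polytope n)"
proof
  assume ext: "is_extreme_point x (polytope n)"
  let ?A = "Dset n x \<union> Tset n x"
  obtain a where a: "a \<in> H4" "L = E4 ?A `` {a}" using L unfolding circ_iff by blast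
  obtain b where ab: "{a,b} \<in> ?A" using nbr_ex[OF A_wf a(1)] by blast
  have ba: "{b,a} \<in> ?A" using ab by (simp add: insert_commute)
  have bH: "b \<in> H4" using wf_edge[OF A_wf ab] by blast
  have nab: "(a,b) \<notin> E4 ?A" using ns shorted_iff[OF A_wf a(1) ab] a(2) by simp
  define M where "M = E4 ?A `` {b}"
  have LM: "L \<inter> M = {}" using cls_int[OF A_wf a(1), of b] nab unfolding M_def a(2) by blast
  have LH: "L \<subseteq> H4" and MH: "M \<subseteq> H4" unfolding a(2) M_def using E_sub by blast+
  define d :: "arc \<Rightarrow> real" where "d e = (if e \<in> L then 1 else if e \<in> M then -1 else 0)" for e
  have d0: "d e = 0" if "e \<notin> H4" for e using that LH MH unfolding d_def by auto
  have dbound: "\<bar>d e\<bar> \<le> 1" for e unfolding d_def by auto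
  have LtoM: "q \<in> M" if "p \<in> L" "{p,q} \<in> ?A" for p q
  proof -
    have "(a,p) \<in> E4 ?A" using that(1) a(2) by simp
    then have "(b,q) \<in> E4 ?A" using nb_class[OF A_wf _ ab that(2)] by simp
    then show ?thesis unfolding M_def by simp
  qed
  have MtoL: "q \<in> L" if "p \<in> M" "{p,q} \<in> ?A" for p q
  proof -
    have "(b,p) \<in> E4 ?A" using that(1) M_def by simp
    then have "(a,q) \<in> E4 ?A" using nb_class[OF A_wf _ ba that(2)] by simp
    then show ?thesis unfolding a(2) by simp
  qed
  have dpq: "d p + d q = 0" if pq: "{p,q} \<in> ?A" for p q
  proof -
    have qp: "{q,p} \<in> ?A" using pq by (simp add: insert_commute)
    show ?thesis
    proof (cases "p \<in> L")
      case True
      then have "q \<in> M" "q \<notin> L" using LtoM[OF True pq] LM by blast+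
      then show ?thesis using True unfolding d_def by simp
    next
      case pL: False
      show ?thesis
      proof (cases "p \<in> M")
        case True
        then have "q \<in> L" using MtoL[OF True pq] by blast
        then show ?thesis using True pL unfolding d_def by simp
      next
        case False
        have "q \<notin> L" using LtoM[OF _ qp] False by blast
        moreover have "q \<notin> M" using MtoL[OF _ qp] pL by blast
        ultimately show ?thesis using False pL unfolding d_def by simp
      qed
    qed
  qed
  have dA: "sum d F = 0" if F: "F \<in> ?A" for F
  proof -
    have "\<exists>p q. p \<noteq> q \<and> p \<in> H4 \<and> q \<in> H4 \<and> F = {p,q}"
    proof (cases "F \<in> Dset n x")
      case True then show ?thesis by (rule D_two)
    next
      case False then have "F \<in> Tset n x" using F by blast
      then show ?thesis by (rule T_two)
    qed
    then obtain p q where pq: "p \<noteq> q" "F = {p,q}" by blast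
    then show ?thesis using dpq F by simp
  qed
  have sumd: "sum d F' = 0" if "F' \<subseteq> arcs n" "pr n x F' \<in> ?A" for F'
  proof -
    have "sum d F' = sum d (pr n x F')" by (rule sum_to_pr[OF that(1)]) (rule d0)
    then show ?thesis using dA[OF that(2)] by simp
  qed
  have pert: "(\<lambda>e. x e + c * d e) \<in> polytope n" if c: "\<bar>c\<bar> \<le> 1/6" for c
  proof -
    let ?y = "\<lambda>e. x e + c * d e"
    have cd: "\<bar>c * d e\<bar> \<le> 1/6" for e
    proof -
      have "\<bar>c * d e\<bar> = \<bar>c\<bar> * \<bar>d e\<bar>" by (simp add: abs_mult)
      also have "\<dots> \<le> 1/6 * 1" using c dbound[of e] by (intro mult_mono) auto
      finally show ?thesis by simp
    qed
    have yH: "?y e \<ge> 1/3" if "e \<in> H4" for e using x_half[OF that] cd[of e] by linarith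
    have y0: "?y e = 0" if "e \<notin> H4" for e using x_zero[OF that] d0[OF that] by simp
    have sy: "sum ?y F' = sum x F' + c * sum d F'" for F' by (simp add: sum.distrib sum_distrib_left)
    show ?thesis unfolding polytope_def mem_Collect_eq
    proof (intro conjI allI impI ballI)
      fix e assume "e \<notin> arcs n"
      then have "e \<notin> H4" using H_sub by blast
      then show "?y e = 0" by (rule y0)
    next
      fix w assume w: "w \<in> verts n"
      have "sum d (out_arcs n w) = 0" using sumd[OF out_sub UnI1[OF conjunct1[OF out_in_D[OF w]]]] .
      then show "sum ?y (out_arcs n w) = 1" using sy deg_out[OF w] by simp
      have "sum d (in_arcs n w) = 0" using sumd[OF in_sub UnI1[OF conjunct2[OF out_in_D[OF w]]]] .
      then show "sum ?y (in_arcs n w) = 1" using sy deg_in[OF w] by simp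
    next
      fix S assume S: "S \<in> subtour_sets n"
      show "sum ?y (out_cut n S) \<ge> 1"
      proof (cases "sum x (out_cut n S) = 1")
        case True
        then have "sum d (out_cut n S) = 0" using sumd[OF cut_sub UnI2[OF cut_T[OF S True]]] by blast
        then show ?thesis using sy True by simp
      next
        case False
        then have gt: "sum x (out_cut n S) > 1" using pol_cut[OF P S] by simp
        let ?C = "pr n x (out_cut n S)"
        have "real (card ?C) / 2 > 1" using gt sum_half[OF cut_sub] by simp
        then have c3: "card ?C \<ge> 3" by linarith
        have "sum ?y (out_cut n S) = sum ?y ?C" by (rule sum_to_pr[OF cut_sub]) (rule y0)
        also have "\<dots> \<ge> sum (\<lambda>e. 1/3) ?C" using yH pr_sub by (intro sum_mono) blast
        finally have "sum ?y (out_cut n S) \<ge> real (card ?C) / 3" by simp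
        moreover have "real (card ?C) / 3 \<ge> 1" using c3 by simp
        ultimately show ?thesis by linarith
      qed
    next
      fix e assume "e \<in> arcs n"
      show "?y e \<ge> 0"
      proof (cases "e \<in> H4")
        case True then show ?thesis using yH[OF True] by linarith
      next
        case False then show ?thesis using y0[OF False] by simp
      qed
    qed
  qed
  let ?y = "\<lambda>e. x e + (1/6) * d e" and ?z = "\<lambda>e. x e + (-1/6) * d e"
  have y: "?y \<in> polytope n" by (rule pert) simp
  have z: "?z \<in> polytope n" by (rule pert) simp
  have "a \<in> L" using a E_refl[OF A_wf a(1)] by simp
  then have "d a = 1" unfolding d_def by simp
  then have "?y a \<noteq> ?z a" by simp
  then have yz: "?y \<noteq> ?z" by metis
  have "x = (\<lambda>e. (1/2) * ?y e + (1 - 1/2) * ?z e)" by (rule HOL.ext) (simp add: algebra_simps)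
  then have "\<exists>y\<in>polytope n. \<exists>z\<in>polytope n. y \<noteq> z \<and> (\<exists>l::real. 0 < l \<and> l < 1 \<and> x = (\<lambda>e. l * y e + (1 - l) * z e))"
    using y z yz by (intro bexI[OF _ y] bexI[OF _ z] conjI exI[where x="1/2"]) auto
  then show False using ext unfolding is_extreme_point_def by blast
qed

end



theorem mainTheorem9:
  fixes n :: nat and x :: "arc \<Rightarrow> real" and ts :: "arc set list"
  assumes "n \<ge> 4"
    and "x \<in> polytope n"
    and "\<forall>e \<in> arcs n. x e = 0 \<or> x e = 1/2"
    and "distinct ts"
    and "set ts = Tset n x - Dset n x"
  shows "(\<forall>j \<le> length ts. counter n x ts j = int (card (nonshorted_pairs n x (A_step n x ts j))))
    \<and> (is_extreme_point x (polytope n) \<longleftrightarrow> (\<exists>j \<le> length ts. counter n x ts j = 0))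
    \<and> (is_extreme_point x (polytope n) \<longleftrightarrow>
         (\<forall>L \<in> circuits n x (Dset n x \<union> Tset n x). shorted n x (Dset n x \<union> Tset n x) L))"
proof -
  note P = assms(2) and half = assms(3) and sts = assms(5)
  let ?D = "Dset n x" and ?T = "Tset n x"
  let ?A = "A_step n x ts"
  let ?p = "\<lambda>j. card (nonshorted_pairs n x (?A j))"
  have wfj: "wfA (half_arcs n x) (?A j)" for j
  proof (rule wf_A[OF P half])
    show "?D \<subseteq> ?A j" unfolding A_step_def by blast
    have "set (take j ts) \<subseteq> set ts" by (rule set_take_subset)
    then show "?A j \<subseteq> ?D \<union> ?T" unfolding A_step_def using sts by blast
  qed
  have pairsNS: "2 * ?p j = card (NSet n x (?A j))" for j
    unfolding NSet_def using card_pairs[OF wfj] .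
  have stepA: "?A (Suc j) = insert (ts ! j) (?A j)" if "j < length ts" for j
    unfolding A_step_def using that by (simp add: take_Suc_conv_app_nth)
  have tsT: "ts ! j \<in> ?T" if "j < length ts" for j
    using nth_mem[OF that] sts by blast
  have stp: "2 * ?p (Suc j) + (if decreases n x (?A j) (ts ! j) then 2 else 0) = 2 * ?p j"
    if j: "j < length ts" for j
  proof -
    obtain e1 e2 where e: "e1 \<noteq> e2" "e1 \<in> half_arcs n x" "e2 \<in> half_arcs n x" "ts ! j = {e1,e2}"
      using T_two[OF P half tsT[OF j]] by blast
    have "card (NSet n x (insert {e1,e2} (?A j))) + (if decreases n x (?A j) {e1,e2} then 2 else 0)
       = card (NSet n x (?A j))" by (rule step_card[OF wfj e(2) e(3) e(1)])
    moreover have "2 * ?p (Suc j) = card (NSet n x (insert {e1,e2} (?A j)))"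
      using pairsNS[of "Suc j"] unfolding stepA[OF j] e(4) .
    moreover have "2 * ?p j = card (NSet n x (?A j))" by (rule pairsNS)
    ultimately show ?thesis using e(4) by simp
  qed
  have cnt_step: "counter n x ts (Suc j) = counter n x ts j - (if decreases n x (?A j) (ts ! j) then 1 else 0)" for j
    by simp
  have partA: "\<forall>j \<le> length ts. counter n x ts j = int (?p j)"
  proof (intro allI impI)
    fix j assume "j \<le> length ts"
    then show "counter n x ts j = int (?p j)"
    proof (induct j)
      case 0
      have A0: "?A 0 = ?D" unfolding A_step_def by simp
      have "card (circuits n x ?D) = 2 * ?p 0"
        using pairsNS[of 0] NSet_D[OF P half] A0 by simp
      then show ?case by simp
    next
      case (Suc j)
      then have j: "j < length ts" by simp
      have IH: "counter n x ts j = int (?p j)" using Suc by simp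
      show ?case
      proof (cases "decreases n x (?A j) (ts ! j)")
        case True
        then have "2 * ?p (Suc j) + 2 = 2 * ?p j" using stp[OF j] by simp
        then have "int (?p (Suc j)) = int (?p j) - 1" by linarith
        then show ?thesis using IH True by simp
      next
        case False
        then have "2 * ?p (Suc j) = 2 * ?p j" using stp[OF j] by simp
        then show ?thesis using IH False by simp
      qed
    qed
  qed
  have ext2: "is_extreme_point x (polytope n) \<longleftrightarrow>
         (\<forall>L \<in> circuits n x (?D \<union> ?T). shorted n x (?D \<union> ?T) L)"
    using ext_if[OF P half] ext_only[OF P half] by blast
  have Alen: "?A (length ts) = ?D \<union> ?T" unfolding A_step_def using sts by auto
  have mono: "counter n x ts k \<le> counter n x ts j" if "j \<le> k" for j k
    using that
  proof (induct k)
    case 0 then show ?case by simp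
  next
    case (Suc k)
    show ?case
    proof (cases "j = Suc k")
      case True then show ?thesis by simp
    next
      case False
      then have "counter n x ts k \<le> counter n x ts j" using Suc by simp
      moreover have "counter n x ts (Suc k) \<le> counter n x ts k" by simp
      ultimately show ?thesis by linarith
    qed
  qed
  have finNS: "finite (NSet n x (?D \<union> ?T))" using finite_NSet[OF wfj[of "length ts", unfolded Alen]] .
  have allsh_iff: "(\<forall>L \<in> circuits n x (?D \<union> ?T). shorted n x (?D \<union> ?T) L) \<longleftrightarrow> counter n x ts (length ts) = 0"
  proof -
    have "counter n x ts (length ts) = int (?p (length ts))" using partA by simp
    moreover have "2 * ?p (length ts) = card (NSet n x (?D \<union> ?T))" using pairsNS[of "length ts"] Alen by simp
    moreover have "card (NSet n x (?D \<union> ?T)) = 0 \<longleftrightarrow> NSet n x (?D \<union> ?T) = {}" using finNS by simp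
    moreover have "NSet n x (?D \<union> ?T) = {} \<longleftrightarrow> (\<forall>L \<in> circuits n x (?D \<union> ?T). shorted n x (?D \<union> ?T) L)"
      unfolding NSet_def by blast
    ultimately show ?thesis by linarith
  qed
  have ext1: "is_extreme_point x (polytope n) \<longleftrightarrow> (\<exists>j \<le> length ts. counter n x ts j = 0)"
  proof
    assume "is_extreme_point x (polytope n)"
    then have "counter n x ts (length ts) = 0" using ext2 allsh_iff by blast
    then show "\<exists>j \<le> length ts. counter n x ts j = 0" by blast
  next
    assume "\<exists>j \<le> length ts. counter n x ts j = 0"
    then obtain j where j: "j \<le> length ts" "counter n x ts j = 0" by blast
    have "counter n x ts (length ts) \<le> 0" using mono[OF j(1)] j(2) by simp
    moreover have "counter n x ts (length ts) \<ge> 0" using partA by simp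
    ultimately have "counter n x ts (length ts) = 0" by simp
    then show "is_extreme_point x (polytope n)" using ext2 allsh_iff by blast
  qed
  show ?thesis using partA ext1 ext2 by blast
qed


end
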